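(* Let $\mathcal{A}\in\mathbb{R}^{n_1\times n_2\times n_3}$, let $\tau>0$, $0<p\le 1$, $l=\min(n_1,n_2)$, and let $w\in\mathbb{R}^l$ satisfy $w_1\ge w_2\ge\cdots\ge w_l\ge 0$. Let $\Phi\in\mathbb{R}^{n_3\times r}$ be semi-orthogonal ($\Phi^\top\Phi=I_r$, $r\le n_3$), let $\Phi^c\in\mathbb{R}^{n_3\times(n_3-r)}$ be such that $\overline{\Phi}=[\Phi,\Phi^c]\in\mathbb{R}^{n_3\times n_3}$ satisfies $\overline{\Phi}^\top\overline{\Phi}=I$. Consider $$\min_{\mathcal{X}\in\mathbb{R}^{n_1\times n_2\times n_3}}\ \tau\|\mathcal{X}\|_{\Phi,w,S_p}^p+\tfrac12\|\mathcal{X}-\mathcal{A}\|_F^2 .$$ Then an optimal solution is $\mathcal{X}^*=(\mathcal{Z})_{\overline{\Phi}^\top}$, where $\mathcal{Z}\in\mathbb{R}^{n_1\times n_2\times n_3}$ is the tensor whose frontal slices are $Z^{(i)}=S_{\tau,w,p}\big(A_\Phi^{(i)}\big)$ for $i=1,\dots,r$ and $Z^{(r+j)}=A_{\Phi^c}^{(j)}$ for $j=1,\dots,n_3-r$.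
   Context: For a tensor $\mathcal{X}\in\mathbb{R}^{n_1\times n_2\times n_3}$, $X^{(k)}=\mathcal{X}_{(:,:,k)}$ denotes its $k$-th frontal slice. For a matrix $\Psi\in\mathbb{R}^{n_3\times s}$, the transformed tensor $\mathcal{X}_\Psi\in\mathbb{R}^{n_1\times n_2\times s}$ is the tensor with frontal slices $X_\Psi^{(i)}=\sum_{k=1}^{n_3}\Psi_{k i}X^{(k)}$, $i=1,\dots,s$ (i.e. each mode-3 fiber $x$ is mapped to $\Psi^\top x$). For a matrix $Y$, $\sigma_j(Y)$ denotes its $j$-th smallest singular value. The $\Phi$-transformed weighted Schatten-$p$ tensor norm is defined by $\|\mathcal{X}\|_{\Phi,w,S_p}^p=\sum_{i=1}^{r}\sum_{j=1}^{l}w_j\,\sigma_j\big(X_\Phi^{(i)}\big)^p$. For $\sigma\ge0$ and $c\ge0$ let $x_p(\sigma,c)$ denote a global minimizer of $\min_{x\ge 0}\tfrac12(x-\sigma)^2+c\,x^p$. For a matrix $Y\in\mathbb{R}^{n_1\times n_2}$ with singular value decomposition $Y=U_Y\Sigma_YV_Y^\top$, define $S_{\tau,w,p}(Y)=U_Y\,\mathrm{diag}(\gamma_1,\dots,\gamma_l)\,V_Y^\top$, where $\gamma_j=x_p(\sigma_j(Y),\tau w_j)$ replaces the singular value $\sigma_j(Y)$ (the $j$-th smallest) in $\Sigma_Y$. *)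

theory Defs
  imports Complex_Main
begin

text \<open>Conventions: indices are 0-based. A tensor in R^(n1 x n2 x n3) is a function
  X :: nat => nat => nat => real, entry X a b k with a < n1, b < n2, k < n3;
  the k-th frontal slice is (%a b. X a b k). A matrix in R^(m x n) is a function
  nat => nat => real, entry M a b with a < m, b < n. Values outside the index
  ranges are irrelevant (all sums are bounded).\<close>

type_synonym tensor = "nat \<Rightarrow> nat \<Rightarrow> nat \<Rightarrow> real"
type_synonym rmat = "nat \<Rightarrow> nat \<Rightarrow> real"

definition slice :: "tensor \<Rightarrow> nat \<Rightarrow> rmat" where
  "slice X k = (\<lambda>a b. X a b k)"

text \<open>Transformed tensor X_Psi for Psi in R^(n3 x s): slice i is sum_k Psi_{k i} X^(k).\<close>
definition transform :: "nat \<Rightarrow> rmat \<Rightarrow> tensor \<Rightarrow> tensor" where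
  "transform n3 Psi X = (\<lambda>a b i. \<Sum>k<n3. Psi k i * X a b k)"

text \<open>Thin SVD of Y in R^(m x n), l = min m n: Y = U diag(s) V^T with U (m x l),
  V (n x l) having orthonormal columns, and s nonnegative in ascending order
  (s j is the (j+1)-th smallest singular value).\<close>
definition is_svd :: "nat \<Rightarrow> nat \<Rightarrow> rmat \<Rightarrow> rmat \<Rightarrow> (nat \<Rightarrow> real) \<Rightarrow> rmat \<Rightarrow> bool" where
  "is_svd m n Y U s V \<longleftrightarrow>
     (\<forall>i<min m n. \<forall>j<min m n. (\<Sum>a<m. U a i * U a j) = (if i = j then 1 else 0)) \<and>
     (\<forall>i<min m n. \<forall>j<min m n. (\<Sum>b<n. V b i * V b j) = (if i = j then 1 else 0)) \<and>
     (\<forall>j<min m n. 0 \<le> s j) \<and>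
     (\<forall>i j. i \<le> j \<and> j < min m n \<longrightarrow> s i \<le> s j) \<and>
     (\<forall>a<m. \<forall>b<n. Y a b = (\<Sum>j<min m n. U a j * s j * V b j))"

text \<open>sing_val m n Y j = sigma_{j+1}(Y), the (j+1)-th smallest singular value.\<close>
definition sing_val :: "nat \<Rightarrow> nat \<Rightarrow> rmat \<Rightarrow> nat \<Rightarrow> real" where
  "sing_val m n Y = (SOME s. \<exists>U V. is_svd m n Y U s V)"

definition wsp_norm_pow :: "nat \<Rightarrow> nat \<Rightarrow> nat \<Rightarrow> nat \<Rightarrow> rmat \<Rightarrow> (nat \<Rightarrow> real) \<Rightarrow> real \<Rightarrow> tensor \<Rightarrow> real" where
  "wsp_norm_pow n1 n2 n3 r Phi w p X =
     (\<Sum>i<r. \<Sum>j<min n1 n2. w j * sing_val n1 n2 (slice (transform n3 Phi X) i) j powr p)"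

definition fro_sq :: "nat \<Rightarrow> nat \<Rightarrow> nat \<Rightarrow> tensor \<Rightarrow> real" where
  "fro_sq n1 n2 n3 X = (\<Sum>a<n1. \<Sum>b<n2. \<Sum>k<n3. (X a b k)\<^sup>2)"

definition is_xp_selection :: "real \<Rightarrow> (real \<Rightarrow> real \<Rightarrow> real) \<Rightarrow> bool" where
  "is_xp_selection p xp \<longleftrightarrow>
     (\<forall>\<sigma>\<ge>0. \<forall>c\<ge>0. 0 \<le> xp \<sigma> c \<and>
        (\<forall>x\<ge>0. (1/2) * (xp \<sigma> c - \<sigma>)\<^sup>2 + c * (xp \<sigma> c) powr p \<le> (1/2) * (x - \<sigma>)\<^sup>2 + c * x powr p))"

definition S_op :: "nat \<Rightarrow> nat \<Rightarrow> (real \<Rightarrow> real \<Rightarrow> real) \<Rightarrow> real \<Rightarrow> (nat \<Rightarrow> real) \<Rightarrow> rmat \<Rightarrow> (nat \<Rightarrow> real) \<Rightarrow> rmat \<Rightarrow> rmat" where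
  "S_op m n xp \<tau> w U s V = (\<lambda>a b. \<Sum>j<min m n. U a j * xp (s j) (\<tau> * w j) * V b j)"

definition phibar :: "nat \<Rightarrow> rmat \<Rightarrow> rmat \<Rightarrow> rmat" where
  "phibar r Phi Phic = (\<lambda>k i. if i < r then Phi k i else Phic k (i - r))"

definition mtranspose :: "rmat \<Rightarrow> rmat" where
  "mtranspose M = (\<lambda>i j. M j i)"

end

theory Submission
  imports Defs "Jordan_Normal_Form.Char_Poly"
begin

lemma swap4: "(\<Sum>a\<in>A. \<Sum>b\<in>B. \<Sum>i\<in>I. \<Sum>j\<in>J. f a b i j) = (\<Sum>i\<in>I. \<Sum>j\<in>J. \<Sum>a\<in>A. \<Sum>b\<in>B. f a b i j)"
proof -
  have "(\<Sum>a\<in>A. \<Sum>b\<in>B. \<Sum>i\<in>I. \<Sum>j\<in>J. f a b i j) = (\<Sum>a\<in>A. \<Sum>i\<in>I. \<Sum>b\<in>B. \<Sum>j\<in>J. f a b i j)"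
    by (rule sum.cong[OF refl], rule sum.swap)
  also have "\<dots> = (\<Sum>i\<in>I. \<Sum>a\<in>A. \<Sum>b\<in>B. \<Sum>j\<in>J. f a b i j)" by (rule sum.swap)
  also have "\<dots> = (\<Sum>i\<in>I. \<Sum>a\<in>A. \<Sum>j\<in>J. \<Sum>b\<in>B. f a b i j)"
    by (rule sum.cong[OF refl], rule sum.cong[OF refl], rule sum.swap)
  also have "\<dots> = (\<Sum>i\<in>I. \<Sum>j\<in>J. \<Sum>a\<in>A. \<Sum>b\<in>B. f a b i j)"
    by (rule sum.cong[OF refl], rule sum.swap)
  finally show ?thesis .
qed

definition orthS :: "nat \<Rightarrow> nat set \<Rightarrow> rmat \<Rightarrow> bool" where
  "orthS m J U \<longleftrightarrow> (\<forall>i\<in>J. \<forall>j\<in>J. (\<Sum>a<m. U a i * U a j) = (if i = j then 1 else 0))"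

lemma proj_resid:
  assumes fin: "finite J" and o: "orthS m J U"
  shows "(\<Sum>a<m. \<Sum>b<m. ((if a = b then 1 else 0) - (\<Sum>j\<in>J. U a j * U b j))\<^sup>2)
         = real m - real (card J)"
proof -
  define P where "P a b = (\<Sum>j\<in>J. U a j * U b j)" for a b
  have e1: "((if a = b then 1 else 0) - P a b)\<^sup>2 =
      (if a = b then 1 else 0) - 2 * (if a = b then P a b else 0) + (P a b)\<^sup>2" for a b
    by (simp add: power2_diff)
  have s1: "(\<Sum>a<m. \<Sum>b<m. (if a = b then 1 else 0::real)) = real m"
    by simp
  have s2: "(\<Sum>a<m. \<Sum>b<m. (if a = b then P a b else 0)) = real (card J)"
  proof -
    have "(\<Sum>a<m. \<Sum>b<m. (if a = b then P a b else 0)) = (\<Sum>a<m. P a a)"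
      by simp
    also have "\<dots> = (\<Sum>j\<in>J. \<Sum>a<m. U a j * U a j)"
      unfolding P_def by (rule sum.swap)
    also have "\<dots> = (\<Sum>j\<in>J. 1)" using o unfolding orthS_def by simp
    also have "\<dots> = real (card J)" by simp
    finally show ?thesis .
  qed
  have s2': "(\<Sum>a<m. P a a) = real (card J)" using s2 by simp
  have s3: "(\<Sum>a<m. \<Sum>b<m. (P a b)\<^sup>2) = real (card J)"
  proof -
    have "(\<Sum>a<m. \<Sum>b<m. (P a b)\<^sup>2) =
       (\<Sum>a<m. \<Sum>b<m. \<Sum>i\<in>J. \<Sum>j\<in>J. (U a i * U a j) * (U b i * U b j))"
      unfolding P_def power2_eq_square sum_product by (simp add: algebra_simps)
    also have "\<dots> = (\<Sum>i\<in>J. \<Sum>j\<in>J. \<Sum>a<m. \<Sum>b<m. (U a i * U a j) * (U b i * U b j))"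
      by (rule swap4)
    also have "\<dots> = (\<Sum>i\<in>J. \<Sum>j\<in>J. (\<Sum>a<m. U a i * U a j) * (\<Sum>b<m. U b i * U b j))"
      by (simp add: sum_product)
    also have "\<dots> = (\<Sum>i\<in>J. \<Sum>j\<in>J. (if i = j then 1 else 0))"
      using o unfolding orthS_def by (intro sum.cong refl) auto
    also have "\<dots> = real (card J)" using fin by simp
    finally show ?thesis .
  qed
  show ?thesis
    unfolding P_def[symmetric] e1
    by (simp add: sum_subtractf sum.distrib sum_distrib_left[symmetric] s1 s2' s3 del: of_nat_sum)
qed

lemma orth_complete:
  assumes o: "orthS m {..<m} U" and a: "a < m" and b: "b < m"
  shows "(\<Sum>j<m. U a j * U b j) = (if a = b then 1 else 0)"
proof -
  have "(\<Sum>a<m. \<Sum>b<m. ((if a = b then 1 else 0) - (\<Sum>j<m. U a j * U b j))\<^sup>2) = 0"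
    using proj_resid[OF _ o] by simp
  hence "\<forall>a\<in>{..<m}. (\<Sum>b<m. ((if a = b then 1 else 0) - (\<Sum>j<m. U a j * U b j))\<^sup>2) = 0"
    by (subst (asm) sum_nonneg_eq_0_iff) (auto intro: sum_nonneg)
  hence "((if a = b then 1 else 0) - (\<Sum>j<m. U a j * U b j))\<^sup>2 = 0"
    using a b by (auto simp: sum_nonneg_eq_0_iff)
  thus ?thesis by simp
qed

lemma orth_ext_step:
  assumes fin: "finite J" and o: "orthS m J U" and c: "card J < m"
  shows "\<exists>g. (\<Sum>a<m. g a * g a) = 1 \<and> (\<forall>j\<in>J. (\<Sum>a<m. g a * U a j) = 0)"
proof -
  define R where "R a b = (if a = b then 1 else 0) - (\<Sum>j\<in>J. U a j * U b j)" for a b :: nat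
  have "(\<Sum>a<m. \<Sum>b<m. (R a b)\<^sup>2) > 0"
    using proj_resid[OF fin o] c unfolding R_def by simp
  hence "\<exists>i<m. (\<Sum>a<m. (R a i)\<^sup>2) > 0"
  proof (rule contrapos_pp)
    assume "\<not> (\<exists>i<m. (\<Sum>a<m. (R a i)\<^sup>2) > 0)"
    hence H: "(\<Sum>a<m. (R a b)\<^sup>2) \<le> 0" if "b < m" for b using that by (meson not_less)
    have "(\<Sum>b<m. \<Sum>a<m. (R a b)\<^sup>2) \<le> 0" by (rule sum_nonpos) (use H in auto)
    thus "\<not> (\<Sum>a<m. \<Sum>b<m. (R a b)\<^sup>2) > 0" by (subst sum.swap) simp
  qed
  then obtain i where i: "i < m" and pos: "(\<Sum>a<m. (R a i)\<^sup>2) > 0" by blast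
  define h where "h a = R a i" for a
  define N where "N = (\<Sum>a<m. h a * h a)"
  have N: "N > 0" using pos unfolding N_def h_def power2_eq_square .
  define g where "g a = h a / sqrt N" for a
  have g1: "(\<Sum>a<m. g a * g a) = 1"
  proof -
    have "(\<Sum>a<m. g a * g a) = (\<Sum>a<m. h a * h a) / (sqrt N * sqrt N)"
      unfolding g_def by (simp add: sum_divide_distrib)
    also have "\<dots> = 1" using N unfolding N_def[symmetric] by simp
    finally show ?thesis .
  qed
  have h0: "(\<Sum>a<m. h a * U a j) = 0" if j: "j \<in> J" for j
  proof -
    have "(\<Sum>a<m. h a * U a j) = (\<Sum>a<m. (if a = i then 1 else 0) * U a j) - (\<Sum>a<m. (\<Sum>k\<in>J. U a k * U i k) * U a j)"
      unfolding h_def R_def by (simp add: left_diff_distrib sum_subtractf)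
    also have "(\<Sum>a<m. (if a = i then 1 else 0) * U a j) = (\<Sum>a<m. (if a = i then U a j else 0))"
      by (rule sum.cong) auto
    also have "\<dots> = U i j" using i by simp
    also have "(\<Sum>a<m. (\<Sum>k\<in>J. U a k * U i k) * U a j) = (\<Sum>a<m. \<Sum>k\<in>J. U i k * (U a k * U a j))"
      by (simp add: sum_distrib_right sum_distrib_left mult_ac)
    also have "\<dots> = (\<Sum>k\<in>J. \<Sum>a<m. U i k * (U a k * U a j))" by (rule sum.swap)
    also have "\<dots> = (\<Sum>k\<in>J. U i k * (\<Sum>a<m. U a k * U a j))" by (simp add: sum_distrib_left)
    also have "\<dots> = (\<Sum>k\<in>J. (if k = j then U i k else 0))"
      using o j unfolding orthS_def by (intro sum.cong refl) auto
    also have "\<dots> = U i j" using fin j by simp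
    finally show ?thesis by simp
  qed
  have "(\<forall>j\<in>J. (\<Sum>a<m. g a * U a j) = 0)"
    using h0 unfolding g_def by (simp add: sum_divide_distrib[symmetric])
  with g1 show ?thesis by blast
qed

lemma orth_extend:
  assumes finK: "finite K" and cK: "card K \<le> m"
  shows "J \<subseteq> K \<Longrightarrow> orthS m J U \<Longrightarrow> \<exists>U'. orthS m K U' \<and> (\<forall>j\<in>J. \<forall>a. U' a j = U a j)"
proof (induction "card (K - J)" arbitrary: J U)
  case 0
  hence "J = K" using finK by (simp add: Diff_eq_empty_iff subset_antisym)
  thus ?case using 0 by blast
next
  case (Suc n)
  obtain j0 where j0: "j0 \<in> K" "j0 \<notin> J" using Suc(2) by (metis Diff_iff card_0_eq Zero_not_Suc ex_in_conv finite_Diff finK)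
  have finJ: "finite J" using Suc(3) finK finite_subset by auto
  have "card J < card K" using Suc(3) j0 finK by (metis psubsetI psubset_card_mono)
  hence cJ: "card J < m" using cK by simp
  obtain g where g: "(\<Sum>a<m. g a * g a) = 1" "\<forall>j\<in>J. (\<Sum>a<m. g a * U a j) = 0"
    using orth_ext_step[OF finJ Suc(4) cJ] by blast
  define U1 where "U1 a j = (if j = j0 then g a else U a j)" for a j
  have o1: "orthS m (insert j0 J) U1"
  proof -
    have jj: "\<And>j. j \<in> J \<Longrightarrow> j \<noteq> j0" using j0(2) by auto
    have gU: "\<forall>j\<in>J. (\<Sum>a<m. U a j * g a) = 0" using g(2) by (simp add: mult.commute)
    show ?thesis unfolding orthS_def
    proof (intro ballI)
      fix i j assume i: "i \<in> insert j0 J" and j: "j \<in> insert j0 J"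
      show "(\<Sum>a<m. U1 a i * U1 a j) = (if i = j then 1 else 0)"
      proof (cases "i = j0")
        case True
        then show ?thesis using j g jj unfolding U1_def by (cases "j = j0") auto
      next
        case False
        hence iJ: "i \<in> J" using i by auto
        show ?thesis
        proof (cases "j = j0")
          case True
          then show ?thesis using gU iJ False unfolding U1_def by auto
        next
          case False
          hence "j \<in> J" using j by auto
          then show ?thesis using iJ Suc(4) jj unfolding U1_def orthS_def by auto
        qed
      qed
    qed
  qed
  have "n = card (K - insert j0 J)" using Suc(2) j0 by (metis Diff_insert card_Diff_singleton diff_Suc_1 DiffI)
  moreover have "insert j0 J \<subseteq> K" using Suc(3) j0 by auto
  ultimately obtain U' where "orthS m K U'" "\<forall>j\<in>insert j0 J. \<forall>a. U' a j = U1 a j"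
    using Suc(1) o1 by blast
  thus ?case unfolding U1_def using j0 by auto
qed

lemma cnt_ge: "(\<Sum>i<k. if c \<le> i then (1::real) else 0) = real (k - c)"
  by (induction k) (auto simp: Suc_diff_le)

lemma telescope_le: "(\<Sum>q\<le>(i::nat). (if q = 0 then a 0 else a q - a (q - 1))) = (a i :: real)"
  by (induction i) (auto simp: sum.atMost_Suc)

lemma expand_tel:
  assumes "i < (k::nat)"
  shows "a i = (\<Sum>q<k. if q \<le> i then (if q = 0 then a 0 else a q - a (q - 1)) else (0::real))"
proof -
  have "(\<Sum>q<k. if q \<le> i then (if q = 0 then a 0 else a q - a (q - 1)) else (0::real))
        = (\<Sum>q\<in>{q\<in>{..<k}. q \<le> i}. (if q = 0 then a 0 else a q - a (q - 1)))"
    by (rule sum.inter_filter[symmetric]) (rule finite_lessThan)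
  also have "{q\<in>{..<k}. q \<le> i} = {..i}" using assms by auto
  finally show ?thesis using telescope_le[of a i] by simp
qed

lemma sum_prod3: "(\<Sum>q\<in>A. f q) * (\<Sum>q'\<in>B. g q') * (c::real) = (\<Sum>q\<in>A. \<Sum>q'\<in>B. f q * g q' * c)"
proof -
  have "(\<Sum>q\<in>A. f q) * (\<Sum>q'\<in>B. g q') = (\<Sum>q\<in>A. \<Sum>q'\<in>B. f q * g q')" by (rule sum_product)
  hence "(\<Sum>q\<in>A. f q) * (\<Sum>q'\<in>B. g q') * c = (\<Sum>q\<in>A. \<Sum>q'\<in>B. f q * g q') * c" by simp
  also have "\<dots> = (\<Sum>q\<in>A. \<Sum>q'\<in>B. f q * g q' * c)" by (simp add: sum_distrib_right)
  finally show ?thesis .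
qed

lemma abel_bound:
  fixes a b :: "nat \<Rightarrow> real" and P :: "nat \<Rightarrow> nat \<Rightarrow> real"
  assumes a0: "\<forall>i<k. 0 \<le> a i" and am: "\<forall>i j. i \<le> j \<and> j < k \<longrightarrow> a i \<le> a j"
    and b0: "\<forall>i<k. 0 \<le> b i" and bm: "\<forall>i j. i \<le> j \<and> j < k \<longrightarrow> b i \<le> b j"
    and P0: "\<forall>i<k. \<forall>j<k. 0 \<le> P i j"
    and row: "\<forall>i<k. (\<Sum>j<k. P i j) \<le> 1" and col: "\<forall>j<k. (\<Sum>i<k. P i j) \<le> 1"
  shows "(\<Sum>i<k. \<Sum>j<k. a i * b j * P i j) \<le> (\<Sum>i<k. a i * b i)"
proof -
  define da where "da q = (if q = 0 then a 0 else a q - a (q - 1))" for q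
  define db where "db q = (if q = 0 then b 0 else b q - b (q - 1))" for q
  have da0: "0 \<le> da q" if "q < k" for q using that a0 am unfolding da_def by auto
  have db0: "0 \<le> db q" if "q < k" for q using that b0 bm unfolding db_def by auto
  define ea where "ea i q = (if q \<le> i then da q else 0)" for i q
  define eb where "eb i q = (if q \<le> i then db q else 0)" for i q
  have ae: "a i = (\<Sum>q<k. ea i q)" if "i < k" for i
    using expand_tel[OF that, of a] unfolding ea_def da_def .
  have be: "b i = (\<Sum>q<k. eb i q)" if "i < k" for i
    using expand_tel[OF that, of b] unfolding eb_def db_def .
  define T where "T q q' = (\<Sum>i<k. \<Sum>j<k. if q \<le> i \<and> q' \<le> j then P i j else 0)" for q q'
  have L: "(\<Sum>i<k. \<Sum>j<k. a i * b j * P i j) = (\<Sum>q<k. \<Sum>q'<k. da q * db q' * T q q')"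
  proof -
    have "(\<Sum>i<k. \<Sum>j<k. a i * b j * P i j) = (\<Sum>i<k. \<Sum>j<k. \<Sum>q<k. \<Sum>q'<k. ea i q * eb j q' * P i j)"
      by (intro sum.cong refl) (simp add: ae be sum_prod3)
    also have "\<dots> = (\<Sum>q<k. \<Sum>q'<k. \<Sum>i<k. \<Sum>j<k. ea i q * eb j q' * P i j)"
      by (rule swap4)
    also have "\<dots> = (\<Sum>q<k. \<Sum>q'<k. da q * db q' * T q q')"
    proof (intro sum.cong refl)
      fix q q'
      have eq: "ea i q * eb j q' * P i j = da q * db q' * (if q \<le> i \<and> q' \<le> j then P i j else 0)" for i j
        unfolding ea_def eb_def by auto
      show "(\<Sum>i<k. \<Sum>j<k. ea i q * eb j q' * P i j) = da q * db q' * T q q'"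
        unfolding eq T_def by (simp add: sum_distrib_left)
    qed
    finally show ?thesis .
  qed
  have R: "(\<Sum>i<k. a i * b i) = (\<Sum>q<k. \<Sum>q'<k. da q * db q' * real (k - max q q'))"
  proof -
    have "(\<Sum>i<k. a i * b i) = (\<Sum>i<k. \<Sum>q<k. \<Sum>q'<k. ea i q * eb i q')"
      by (intro sum.cong refl) (simp add: ae be sum_product)
    also have "\<dots> = (\<Sum>q<k. \<Sum>q'<k. \<Sum>i<k. ea i q * eb i q')"
      by (subst sum.swap, rule sum.cong[OF refl], rule sum.swap)
    also have "\<dots> = (\<Sum>q<k. \<Sum>q'<k. da q * db q' * real (k - max q q'))"
    proof (intro sum.cong refl)
      fix q q'
      have "(\<Sum>i<k. ea i q * eb i q') = (\<Sum>i<k. da q * db q' * (if max q q' \<le> i then 1 else 0))"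
        unfolding ea_def eb_def by (intro sum.cong refl) auto
      also have "\<dots> = da q * db q' * real (k - max q q')"
        using cnt_ge[of "max q q'" k] by (simp add: sum_distrib_left[symmetric])
      finally show "(\<Sum>i<k. ea i q * eb i q') = da q * db q' * real (k - max q q')" .
    qed
    finally show ?thesis .
  qed
  have Tb: "T q q' \<le> real (k - max q q')" if "q < k" "q' < k" for q q'
  proof -
    have t1: "T q q' \<le> real (k - q)"
    proof -
      have "T q q' \<le> (\<Sum>i<k. if q \<le> i then (\<Sum>j<k. P i j) else 0)"
        unfolding T_def
      proof (rule sum_mono)
        fix i assume i: "i \<in> {..<k}"
        show "(\<Sum>j<k. if q \<le> i \<and> q' \<le> j then P i j else 0) \<le> (if q \<le> i then (\<Sum>j<k. P i j) else 0)"
        proof (cases "q \<le> i")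
          case True
          show ?thesis using True i P0 by (simp, intro sum_mono) auto
        qed simp
      qed
      also have "\<dots> \<le> (\<Sum>i<k. if q \<le> i then 1 else 0)"
        by (intro sum_mono) (auto simp: row)
      finally show ?thesis by (simp add: cnt_ge)
    qed
    have t2: "T q q' \<le> real (k - q')"
    proof -
      have "T q q' = (\<Sum>j<k. \<Sum>i<k. if q \<le> i \<and> q' \<le> j then P i j else 0)"
        unfolding T_def by (rule sum.swap)
      also have "\<dots> \<le> (\<Sum>j<k. if q' \<le> j then (\<Sum>i<k. P i j) else 0)"
      proof (rule sum_mono)
        fix j assume j: "j \<in> {..<k}"
        show "(\<Sum>i<k. if q \<le> i \<and> q' \<le> j then P i j else 0) \<le> (if q' \<le> j then (\<Sum>i<k. P i j) else 0)"
        proof (cases "q' \<le> j")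
          case True
          show ?thesis using True j P0 by (simp, intro sum_mono) auto
        qed simp
      qed
      also have "\<dots> \<le> (\<Sum>j<k. if q' \<le> j then 1 else 0)"
        by (intro sum_mono) (auto simp: col)
      finally show ?thesis by (simp add: cnt_ge)
    qed
    show ?thesis using t1 t2 by (cases "q \<le> q'") (auto simp: max_def)
  qed
  show ?thesis unfolding L R
    by (intro sum_mono mult_left_mono Tb) (auto intro!: mult_nonneg_nonneg da0 db0)
qed

lemma bessel:
  assumes o: "orthS m {..<t} U"
  shows "(\<Sum>j<t. (\<Sum>a<m. x a * U a j)\<^sup>2) \<le> (\<Sum>a<m. (x a)\<^sup>2)"
proof -
  define c where "c j = (\<Sum>a<m. x a * U a j)" for j
  have "0 \<le> (\<Sum>a<m. (x a - (\<Sum>j<t. c j * U a j))\<^sup>2)" by (intro sum_nonneg) auto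
  also have "\<dots> = (\<Sum>a<m. (x a)\<^sup>2) - 2 * (\<Sum>j<t. c j * (\<Sum>a<m. x a * U a j))
      + (\<Sum>j<t. \<Sum>j'<t. c j * c j' * (\<Sum>a<m. U a j * U a j'))"
  proof -
    have "(\<Sum>a<m. (x a - (\<Sum>j<t. c j * U a j))\<^sup>2) =
      (\<Sum>a<m. (x a)\<^sup>2) - 2 * (\<Sum>a<m. \<Sum>j<t. c j * (x a * U a j))
      + (\<Sum>a<m. \<Sum>j<t. \<Sum>j'<t. c j * c j' * (U a j * U a j'))"
      by (simp add: power2_diff sum_subtractf sum.distrib sum_distrib_left sum_distrib_right
          power2_eq_square sum_product algebra_simps)
    also have "(\<Sum>a<m. \<Sum>j<t. c j * (x a * U a j)) = (\<Sum>j<t. c j * (\<Sum>a<m. x a * U a j))"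
      by (subst sum.swap) (simp add: sum_distrib_left)
    also have "(\<Sum>a<m. \<Sum>j<t. \<Sum>j'<t. c j * c j' * (U a j * U a j')) =
       (\<Sum>j<t. \<Sum>j'<t. c j * c j' * (\<Sum>a<m. U a j * U a j'))"
      by (subst sum.swap, rule sum.cong[OF refl], subst sum.swap) (simp add: sum_distrib_left)
    finally show ?thesis .
  qed
  also have "\<dots> = (\<Sum>a<m. (x a)\<^sup>2) - (\<Sum>j<t. (c j)\<^sup>2)"
  proof -
    have "(\<Sum>j<t. \<Sum>j'<t. c j * c j' * (\<Sum>a<m. U a j * U a j')) = (\<Sum>j<t. \<Sum>j'<t. if j = j' then c j * c j else 0)"
      using o unfolding orthS_def by (intro sum.cong refl) auto
    also have "\<dots> = (\<Sum>j<t. (c j)\<^sup>2)" by (simp add: power2_eq_square)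
    finally show ?thesis unfolding c_def[symmetric] by (simp add: power2_eq_square)
  qed
  finally show ?thesis unfolding c_def by simp
qed

lemma ipe_aux: "(c::real) * ((\<Sum>a\<in>A. f a) * (\<Sum>b\<in>B. g b)) = (\<Sum>a\<in>A. \<Sum>b\<in>B. c * (f a * g b))"
  unfolding sum_product by (simp add: sum_distrib_left)

lemma ipe:
  fixes U V U' V' :: rmat and x y :: "nat \<Rightarrow> real"
  shows "(\<Sum>a<m. \<Sum>b<n. (\<Sum>i<k. U a i * x i * V b i) * (\<Sum>j<k. U' a j * y j * V' b j)) =
   (\<Sum>i<k. \<Sum>j<k. x i * y j * ((\<Sum>a<m. U a i * U' a j) * (\<Sum>b<n. V b i * V' b j)))"
proof -
  have "(\<Sum>a<m. \<Sum>b<n. (\<Sum>i<k. U a i * x i * V b i) * (\<Sum>j<k. U' a j * y j * V' b j)) =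
     (\<Sum>a<m. \<Sum>b<n. \<Sum>i<k. \<Sum>j<k. x i * y j * ((U a i * U' a j) * (V b i * V' b j)))"
    by (simp add: sum_product mult_ac)
  also have "\<dots> = (\<Sum>i<k. \<Sum>j<k. \<Sum>a<m. \<Sum>b<n. x i * y j * ((U a i * U' a j) * (V b i * V' b j)))"
    by (rule swap4)
  also have "\<dots> = (\<Sum>i<k. \<Sum>j<k. x i * y j * ((\<Sum>a<m. U a i * U' a j) * (\<Sum>b<n. V b i * V' b j)))"
    by (intro sum.cong refl) (simp only: ipe_aux)
  finally show ?thesis .
qed

lemma svd_orthU: "is_svd m n Y U s V \<Longrightarrow> orthS m {..<min m n} U"
  unfolding is_svd_def orthS_def by auto
lemma svd_orthV: "is_svd m n Y U s V \<Longrightarrow> orthS n {..<min m n} V"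
  unfolding is_svd_def orthS_def by auto

lemma svd_ip:
  assumes X: "is_svd m n X U x V" and Y: "is_svd m n Y U' y V'"
  shows "(\<Sum>a<m. \<Sum>b<n. X a b * Y a b) =
    (\<Sum>i<min m n. \<Sum>j<min m n. x i * y j * ((\<Sum>a<m. U a i * U' a j) * (\<Sum>b<n. V b i * V' b j)))"
proof -
  have "(\<Sum>a<m. \<Sum>b<n. X a b * Y a b) = (\<Sum>a<m. \<Sum>b<n. (\<Sum>i<min m n. U a i * x i * V b i) * (\<Sum>j<min m n. U' a j * y j * V' b j))"
    using X Y unfolding is_svd_def by (intro sum.cong refl) auto
  thus ?thesis by (simp only: ipe)
qed

lemma ip_same:
  assumes oU: "orthS m {..<k} U" and oV: "orthS n {..<k} V"
  shows "(\<Sum>a<m. \<Sum>b<n. (\<Sum>i<k. U a i * x i * V b i) * (\<Sum>j<k. U a j * y j * V b j)) = (\<Sum>i<k. x i * y i)"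
proof -
  have "(\<Sum>a<m. \<Sum>b<n. (\<Sum>i<k. U a i * x i * V b i) * (\<Sum>j<k. U a j * y j * V b j)) =
    (\<Sum>i<k. \<Sum>j<k. x i * y j * ((\<Sum>a<m. U a i * U a j) * (\<Sum>b<n. V b i * V b j)))" by (rule ipe)
  also have "\<dots> = (\<Sum>i<k. \<Sum>j<k. if i = j then x i * y i else 0)"
    using oU oV unfolding orthS_def by (intro sum.cong refl) auto
  also have "\<dots> = (\<Sum>i<k. x i * y i)" by simp
  finally show ?thesis .
qed

lemma svd_norm:
  assumes X: "is_svd m n X U x V"
  shows "(\<Sum>a<m. \<Sum>b<n. X a b * X a b) = (\<Sum>i<min m n. x i * x i)"
proof -
  have "(\<Sum>a<m. \<Sum>b<n. X a b * X a b) = (\<Sum>a<m. \<Sum>b<n. (\<Sum>i<min m n. U a i * x i * V b i) * (\<Sum>j<min m n. U a j * x j * V b j))"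
    using X unfolding is_svd_def by (intro sum.cong refl) auto
  thus ?thesis by (simp only: ip_same[OF svd_orthU[OF X] svd_orthV[OF X]])
qed

lemma cd_le: "(c::real) * d \<le> (c\<^sup>2 + d\<^sup>2) / 2"
proof -
  have "0 \<le> (c - d)\<^sup>2" by simp
  thus ?thesis by (simp add: power2_diff field_simps)
qed

lemma von_neumann:
  assumes X: "is_svd m n X U x V" and Y: "is_svd m n Y U' y V'"
  shows "(\<Sum>a<m. \<Sum>b<n. X a b * Y a b) \<le> (\<Sum>j<min m n. x j * y j)"
proof -
  define k where "k = min m n"
  define c where "c i j = (\<Sum>a<m. U a i * U' a j)" for i j
  define d where "d i j = (\<Sum>b<n. V b i * V' b j)" for i j
  define P where "P i j = ((c i j)\<^sup>2 + (d i j)\<^sup>2) / 2" for i j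
  have x0: "\<forall>i<k. 0 \<le> x i" and y0: "\<forall>i<k. 0 \<le> y i"
    using X Y unfolding is_svd_def k_def by auto
  have xm: "\<forall>i j. i \<le> j \<and> j < k \<longrightarrow> x i \<le> x j" and ym: "\<forall>i j. i \<le> j \<and> j < k \<longrightarrow> y i \<le> y j"
    using X Y unfolding is_svd_def k_def by auto
  have oU: "orthS m {..<k} U" and oV: "orthS n {..<k} V" and oU': "orthS m {..<k} U'" and oV': "orthS n {..<k} V'"
    using svd_orthU[OF X] svd_orthV[OF X] svd_orthU[OF Y] svd_orthV[OF Y] unfolding k_def by auto
  have "(\<Sum>a<m. \<Sum>b<n. X a b * Y a b) = (\<Sum>i<k. \<Sum>j<k. x i * y j * (c i j * d i j))"
    unfolding svd_ip[OF X Y] c_def d_def k_def ..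
  also have "\<dots> \<le> (\<Sum>i<k. \<Sum>j<k. x i * y j * P i j)"
    unfolding P_def using x0 y0 by (intro sum_mono mult_left_mono cd_le) auto
  also have "\<dots> \<le> (\<Sum>i<k. x i * y i)"
  proof (rule abel_bound[OF x0 xm y0 ym])
    show "\<forall>i<k. \<forall>j<k. 0 \<le> P i j" unfolding P_def by auto
    have b1: "(\<Sum>j<k. (c i j)\<^sup>2) \<le> 1" if "i < k" for i
    proof -
      have "(\<Sum>j<k. (c i j)\<^sup>2) \<le> (\<Sum>a<m. (U a i)\<^sup>2)" unfolding c_def by (rule bessel[OF oU'])
      also have "\<dots> = 1" using oU that unfolding orthS_def by (simp add: power2_eq_square)
      finally show ?thesis .
    qed
    have b2: "(\<Sum>j<k. (d i j)\<^sup>2) \<le> 1" if "i < k" for i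
    proof -
      have "(\<Sum>j<k. (d i j)\<^sup>2) \<le> (\<Sum>b<n. (V b i)\<^sup>2)" unfolding d_def by (rule bessel[OF oV'])
      also have "\<dots> = 1" using oV that unfolding orthS_def by (simp add: power2_eq_square)
      finally show ?thesis .
    qed
    have b3: "(\<Sum>i<k. (c i j)\<^sup>2) \<le> 1" if "j < k" for j
    proof -
      have "(\<Sum>i<k. (c i j)\<^sup>2) = (\<Sum>i<k. (\<Sum>a<m. U' a j * U a i)\<^sup>2)" unfolding c_def by (simp add: mult.commute)
      also have "\<dots> \<le> (\<Sum>a<m. (U' a j)\<^sup>2)" by (rule bessel[OF oU])
      also have "\<dots> = 1" using oU' that unfolding orthS_def by (simp add: power2_eq_square)
      finally show ?thesis .
    qed
    have b4: "(\<Sum>i<k. (d i j)\<^sup>2) \<le> 1" if "j < k" for j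
    proof -
      have "(\<Sum>i<k. (d i j)\<^sup>2) = (\<Sum>i<k. (\<Sum>b<n. V' b j * V b i)\<^sup>2)" unfolding d_def by (simp add: mult.commute)
      also have "\<dots> \<le> (\<Sum>b<n. (V' b j)\<^sup>2)" by (rule bessel[OF oV])
      also have "\<dots> = 1" using oV' that unfolding orthS_def by (simp add: power2_eq_square)
      finally show ?thesis .
    qed
    show "\<forall>i<k. (\<Sum>j<k. P i j) \<le> 1"
    proof (intro allI impI)
      fix i assume i: "i < k"
      have "(\<Sum>j<k. P i j) = ((\<Sum>j<k. (c i j)\<^sup>2) + (\<Sum>j<k. (d i j)\<^sup>2)) / 2"
        unfolding P_def by (simp add: sum_divide_distrib[symmetric] sum.distrib)
      thus "(\<Sum>j<k. P i j) \<le> 1" using b1[OF i] b2[OF i] by simp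
    qed
    show "\<forall>j<k. (\<Sum>i<k. P i j) \<le> 1"
    proof (intro allI impI)
      fix j assume j: "j < k"
      have "(\<Sum>i<k. P i j) = ((\<Sum>i<k. (c i j)\<^sup>2) + (\<Sum>i<k. (d i j)\<^sup>2)) / 2"
        unfolding P_def by (simp add: sum_divide_distrib[symmetric] sum.distrib)
      thus "(\<Sum>i<k. P i j) \<le> 1" using b3[OF j] b4[OF j] by simp
    qed
  qed
  finally show ?thesis unfolding k_def .
qed

lemma svd_unique:
  assumes X: "is_svd m n Y U x V" and Y: "is_svd m n Y U' y V'" and j: "j < min m n"
  shows "x j = y j"
proof -
  define k where "k = min m n"
  have "(\<Sum>i<k. (x i - y i)\<^sup>2) = (\<Sum>i<k. x i * x i) - 2 * (\<Sum>i<k. x i * y i) + (\<Sum>i<k. y i * y i)"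
  proof -
    have "(\<Sum>i<k. (x i - y i)\<^sup>2) = (\<Sum>i<k. x i * x i - 2 * (x i * y i) + y i * y i)"
      by (intro sum.cong refl) (simp add: power2_eq_square algebra_simps)
    also have "\<dots> = (\<Sum>i<k. x i * x i) - 2 * (\<Sum>i<k. x i * y i) + (\<Sum>i<k. y i * y i)"
      by (simp add: sum.distrib sum_subtractf sum_distrib_left)
    finally show ?thesis .
  qed
  also have "\<dots> \<le> 0"
    using svd_norm[OF X] svd_norm[OF Y] von_neumann[OF X Y] unfolding k_def by simp
  finally have "(\<Sum>i<k. (x i - y i)\<^sup>2) \<le> 0" .
  hence "(\<Sum>i<k. (x i - y i)\<^sup>2) = 0" by (simp add: antisym sum_nonneg)
  hence "\<forall>i\<in>{..<k}. (x i - y i)\<^sup>2 = 0" by (simp add: sum_nonneg_eq_0_iff)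
  thus ?thesis using j unfolding k_def by simp
qed

lemma sing_val_eq:
  assumes X: "is_svd m n Y U x V" and j: "j < min m n"
  shows "sing_val m n Y j = x j"
proof -
  have "\<exists>U V. is_svd m n Y U (SOME s. \<exists>U V. is_svd m n Y U s V) V"
    by (rule someI_ex[of "\<lambda>s. \<exists>U V. is_svd m n Y U s V"]) (use X in blast)
  hence "\<exists>U V. is_svd m n Y U (sing_val m n Y) V" unfolding sing_val_def .
  then obtain U' V' where "is_svd m n Y U' (sing_val m n Y) V'" by blast
  from svd_unique[OF this X j] show ?thesis .
qed

lemma real_eig:
  fixes d :: nat and C :: rmat
  assumes d: "d > 0" and sym: "\<forall>i<d. \<forall>j<d. C i j = C j i"
  shows "\<exists>x \<mu>. (\<exists>i<d. x i \<noteq> 0) \<and> (\<forall>i<d. (\<Sum>j<d. C i j * x j) = \<mu> * x i)"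
proof -
  define Cc where "Cc = mat d d (\<lambda>(i,j). complex_of_real (C i j))"
  have Cc: "Cc \<in> carrier_mat d d" unfolding Cc_def by simp
  obtain as where as: "char_poly Cc = (\<Prod>a\<leftarrow>as. [:- a, 1:])" "length as = d"
    using char_poly_factorized[OF Cc] by blast
  then obtain e rest where er: "as = e # rest" using d by (cases as) auto
  have "poly (char_poly Cc) e = 0" unfolding as(1) er by simp
  hence "eigenvalue Cc e" using eigenvalue_root_char_poly[OF Cc] by simp
  then obtain v where v: "eigenvector Cc v e" unfolding eigenvalue_def by blast
  have dimr: "dim_row Cc = d" using Cc by simp
  have vc: "v \<in> carrier_vec d" and vnz: "v \<noteq> 0\<^sub>v d" and ev: "Cc *\<^sub>v v = e \<cdot>\<^sub>v v"
    using v unfolding eigenvector_def dimr by auto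
  have dv: "dim_vec v = d" using vc by simp
  have comp: "(\<Sum>j<d. complex_of_real (C i j) * v $ j) = e * v $ i" if i: "i < d" for i
  proof -
    have "(Cc *\<^sub>v v) $ i = e * v $ i" using ev i dv by (metis index_smult_vec(1))
    moreover have "(Cc *\<^sub>v v) $ i = (\<Sum>j<d. complex_of_real (C i j) * v $ j)"
      using i dv Cc unfolding Cc_def by (simp add: scalar_prod_def atLeast0LessThan)
    ultimately show ?thesis by simp
  qed
  obtain i0 where i0: "i0 < d" "v $ i0 \<noteq> 0" using vnz dv by (auto simp: vec_eq_iff)
  define x where "x j = Re (v $ j)" for j
  define y where "y j = Im (v $ j)" for j
  define \<alpha> where "\<alpha> = Re e"
  define \<beta> where "\<beta> = Im e"
  have cx: "(\<Sum>j<d. C i j * x j) = \<alpha> * x i - \<beta> * y i" if "i < d" for i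
  proof -
    have "Re (\<Sum>j<d. complex_of_real (C i j) * v $ j) = Re (e * v $ i)" using comp[OF that] by simp
    thus ?thesis unfolding x_def y_def \<alpha>_def \<beta>_def by (simp add: Re_sum)
  qed
  have cy: "(\<Sum>j<d. C i j * y j) = \<beta> * x i + \<alpha> * y i" if "i < d" for i
  proof -
    have "Im (\<Sum>j<d. complex_of_real (C i j) * v $ j) = Im (e * v $ i)" using comp[OF that] by simp
    thus ?thesis unfolding x_def y_def \<alpha>_def \<beta>_def by (simp add: Im_sum)
  qed
  have "(\<Sum>i<d. x i * (\<Sum>j<d. C i j * y j)) = (\<Sum>i<d. y i * (\<Sum>j<d. C i j * x j))"
  proof -
    have "(\<Sum>i<d. x i * (\<Sum>j<d. C i j * y j)) = (\<Sum>i<d. \<Sum>j<d. x i * C i j * y j)"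
      by (simp add: sum_distrib_left mult_ac)
    also have "\<dots> = (\<Sum>j<d. \<Sum>i<d. x i * C i j * y j)" by (rule sum.swap)
    also have "\<dots> = (\<Sum>j<d. y j * (\<Sum>i<d. C j i * x i))"
      using sym by (simp add: sum_distrib_left mult_ac)
    finally show ?thesis .
  qed
  hence "(\<Sum>i<d. x i * (\<beta> * x i + \<alpha> * y i)) = (\<Sum>i<d. y i * (\<alpha> * x i - \<beta> * y i))"
    using cx cy by simp
  hence "\<beta> * (\<Sum>i<d. (x i)\<^sup>2 + (y i)\<^sup>2) = 0"
    by (simp add: algebra_simps sum.distrib sum_subtractf sum_distrib_left power2_eq_square)
  moreover have "(\<Sum>i<d. (x i)\<^sup>2 + (y i)\<^sup>2) > 0"
  proof -
    have "x i0 \<noteq> 0 \<or> y i0 \<noteq> 0" using i0(2) unfolding x_def y_def by (auto simp: complex_eq_iff)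
    hence "(x i0)\<^sup>2 + (y i0)\<^sup>2 > 0" by (simp add: sum_power2_gt_zero_iff)
    hence "(x i0)\<^sup>2 + (y i0)\<^sup>2 \<le> (\<Sum>i<d. (x i)\<^sup>2 + (y i)\<^sup>2)"
      by (intro member_le_sum) (use i0 in auto)
    with \<open>(x i0)\<^sup>2 + (y i0)\<^sup>2 > 0\<close> show ?thesis by linarith
  qed
  ultimately have b0: "\<beta> = 0" by simp
  show ?thesis
  proof (cases "x i0 = 0")
    case False
    thus ?thesis using cx b0 i0 by (intro exI[of _ x] exI[of _ \<alpha>]) auto
  next
    case True
    hence "y i0 \<noteq> 0" using i0(2) unfolding x_def y_def by (simp add: complex_eq_iff)
    thus ?thesis using cy b0 i0 by (intro exI[of _ y] exI[of _ \<alpha>]) (auto simp: mult.commute)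
  qed
qed

lemma sum_split_at:
  fixes f :: "nat \<Rightarrow> real"
  assumes "t \<le> n"
  shows "(\<Sum>j<n. f j) = (\<Sum>j<t. f j) + (\<Sum>i<n - t. f (t + i))"
proof -
  have "{..<n} = {..<t} \<union> {t..<n}" using assms by auto
  hence "(\<Sum>j<n. f j) = sum f ({..<t} \<union> {t..<n})" by simp
  also have "\<dots> = (\<Sum>j<t. f j) + (\<Sum>j\<in>{t..<n}. f j)"
    by (rule sum.union_disjoint) auto
  also have "(\<Sum>j\<in>{t..<n}. f j) = (\<Sum>i<n - t. f (t + i))"
  proof -
    have "{t..<n} = (\<lambda>i. t + i) ` {..<n - t}"
    proof (intro equalityI subsetI)
      fix x assume "x \<in> {t..<n}"
      hence "x - t \<in> {..<n - t}" "x = t + (x - t)" by auto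
      thus "x \<in> (\<lambda>i. t + i) ` {..<n - t}" by blast
    next
      fix x assume "x \<in> (\<lambda>i. t + i) ` {..<n - t}"
      thus "x \<in> {t..<n}" using assms by auto
    qed
    moreover have "inj_on (\<lambda>i. t + i) {..<n - t}" by (simp add: inj_on_def)
    ultimately show ?thesis by (simp add: sum.reindex)
  qed
  finally show ?thesis .
qed

lemma expand_basis:
  assumes o: "orthS n {..<n} Q" and a: "a < n"
  shows "z a = (\<Sum>j<n. Q a j * (\<Sum>a'<n. Q a' j * z a'))"
proof -
  have "(\<Sum>j<n. Q a j * (\<Sum>a'<n. Q a' j * z a')) = (\<Sum>j<n. \<Sum>a'<n. Q a j * Q a' j * z a')"
    by (simp add: sum_distrib_left mult_ac)
  also have "\<dots> = (\<Sum>a'<n. \<Sum>j<n. Q a j * Q a' j * z a')" by (rule sum.swap)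
  also have "\<dots> = (\<Sum>a'<n. (\<Sum>j<n. Q a j * Q a' j) * z a')"
    by (simp add: sum_distrib_right)
  also have "\<dots> = (\<Sum>a'<n. (if a = a' then 1 else 0) * z a')"
    using orth_complete[OF o a] by (intro sum.cong refl) auto
  also have "\<dots> = (\<Sum>a'<n. (if a' = a then z a else 0))" by (intro sum.cong refl) auto
  also have "\<dots> = z a" using a by simp
  finally show ?thesis by simp
qed

lemma spectral_step:
  fixes M Q :: rmat and lam :: "nat \<Rightarrow> real"
  assumes sym: "\<forall>a<n. \<forall>b<n. M a b = M b a" and t: "t < n" and oQ: "orthS n {..<t} Q"
    and eig: "\<forall>j<t. \<forall>a<n. (\<Sum>b<n. M a b * Q b j) = lam j * Q a j"
  shows "\<exists>q \<mu>. (\<Sum>a<n. q a * q a) = 1 \<and> (\<forall>j<t. (\<Sum>a<n. q a * Q a j) = 0) \<and>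
               (\<forall>a<n. (\<Sum>b<n. M a b * q b) = \<mu> * q a)"
proof -
  obtain Q' where oQ': "orthS n {..<n} Q'" and agree: "\<forall>j\<in>{..<t}. \<forall>a. Q' a j = Q a j"
    using orth_extend[of "{..<n}" n "{..<t}" Q] oQ t by auto
  have o': "(\<Sum>a<n. Q' a i * Q' a j) = (if i = j then 1 else 0)" if "i < n" "j < n" for i j
    using oQ' that unfolding orthS_def by auto
  define d where "d = n - t"
  have d: "d > 0" using t unfolding d_def by simp
  define W where "W a i = Q' a (t + i)" for a i
  define C where "C i i' = (\<Sum>a<n. \<Sum>b<n. W a i * M a b * W b i')" for i i'
  have Csym: "\<forall>i<d. \<forall>j<d. C i j = C j i"
  proof (intro allI impI)
    fix i j
    have "C i j = (\<Sum>b<n. \<Sum>a<n. W a i * M a b * W b j)" unfolding C_def by (rule sum.swap)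
    also have "\<dots> = C j i" unfolding C_def using sym
      by (intro sum.cong refl) (simp add: mult_ac)
    finally show "C i j = C j i" .
  qed
  obtain c \<mu> where cnz: "\<exists>i<d. c i \<noteq> 0" and ceig: "\<forall>i<d. (\<Sum>j<d. C i j * c j) = \<mu> * c i"
    using real_eig[OF d Csym] by blast
  define y where "y a = (\<Sum>i<d. W a i * c i)" for a
  have MW: "(\<Sum>b<n. M a b * W b i) = (\<Sum>i'<d. W a i' * C i' i)" if a: "a < n" and i: "i < d" for a i
  proof -
    define z where "z a = (\<Sum>b<n. M a b * W b i)" for a
    have "z a = (\<Sum>j<n. Q' a j * (\<Sum>a'<n. Q' a' j * z a'))" by (rule expand_basis[OF oQ' a])
    also have "\<dots> = (\<Sum>j<t. Q' a j * (\<Sum>a'<n. Q' a' j * z a')) + (\<Sum>i'<d. Q' a (t + i') * (\<Sum>a'<n. Q' a' (t + i') * z a'))"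
      unfolding d_def using t by (intro sum_split_at) simp
    also have "(\<Sum>j<t. Q' a j * (\<Sum>a'<n. Q' a' j * z a')) = 0"
    proof (rule sum.neutral, rule ballI)
      fix j assume j: "j \<in> {..<t}"
      have "(\<Sum>a'<n. Q' a' j * z a') = (\<Sum>a'<n. \<Sum>b<n. Q' a' j * M a' b * W b i)"
        unfolding z_def by (simp add: sum_distrib_left mult_ac)
      also have "\<dots> = (\<Sum>b<n. \<Sum>a'<n. Q' a' j * M a' b * W b i)" by (rule sum.swap)
      also have "\<dots> = (\<Sum>b<n. (\<Sum>a'<n. M b a' * Q a' j) * W b i)"
        using sym agree j by (intro sum.cong refl) (simp add: sum_distrib_right sum_distrib_left mult_ac)
      also have "\<dots> = (\<Sum>b<n. lam j * (Q' b j * Q' b (t + i)))"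
        using eig agree j by (intro sum.cong refl) (simp add: W_def)
      also have "\<dots> = lam j * (\<Sum>b<n. Q' b j * Q' b (t + i))" by (simp add: sum_distrib_left)
      also have "\<dots> = 0" using o'[of j "t + i"] j i t unfolding d_def by simp
      finally show "Q' a j * (\<Sum>a'<n. Q' a' j * z a') = 0" by simp
    qed
    also have "(\<Sum>i'<d. Q' a (t + i') * (\<Sum>a'<n. Q' a' (t + i') * z a')) = (\<Sum>i'<d. W a i' * C i' i)"
    proof (intro sum.cong refl)
      fix i' assume "i' \<in> {..<d}"
      have "(\<Sum>a'<n. Q' a' (t + i') * z a') = C i' i"
        unfolding z_def C_def W_def by (simp add: sum_distrib_left mult_ac)
      thus "Q' a (t + i') * (\<Sum>a'<n. Q' a' (t + i') * z a') = W a i' * C i' i" unfolding W_def by simp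
    qed
    finally show ?thesis unfolding z_def by simp
  qed
  have My: "(\<Sum>b<n. M a b * y b) = \<mu> * y a" if a: "a < n" for a
  proof -
    have "(\<Sum>b<n. M a b * y b) = (\<Sum>b<n. \<Sum>i<d. M a b * W b i * c i)"
      unfolding y_def by (simp add: sum_distrib_left mult_ac)
    also have "\<dots> = (\<Sum>i<d. \<Sum>b<n. M a b * W b i * c i)" by (rule sum.swap)
    also have "\<dots> = (\<Sum>i<d. (\<Sum>b<n. M a b * W b i) * c i)" by (simp add: sum_distrib_right)
    also have "\<dots> = (\<Sum>i<d. (\<Sum>i'<d. W a i' * C i' i) * c i)"
      using MW a by (intro sum.cong refl) simp
    also have "\<dots> = (\<Sum>i<d. \<Sum>i'<d. W a i' * (C i' i * c i))" by (simp add: sum_distrib_right sum_distrib_left mult_ac)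
    also have "\<dots> = (\<Sum>i'<d. \<Sum>i<d. W a i' * (C i' i * c i))" by (rule sum.swap)
    also have "\<dots> = (\<Sum>i'<d. W a i' * (\<mu> * c i'))"
      using ceig by (intro sum.cong refl) (simp add: sum_distrib_left[symmetric])
    also have "\<dots> = \<mu> * y a" unfolding y_def by (simp add: sum_distrib_left mult_ac)
    finally show ?thesis .
  qed
  have oW: "(\<Sum>a<n. W a i * W a i') = (if i = i' then 1 else 0)" if "i < d" "i' < d" for i i'
    using o'[of "t + i" "t + i'"] that unfolding W_def d_def by simp
  have yQ: "(\<Sum>a<n. y a * Q a j) = 0" if j: "j < t" for j
  proof -
    have "(\<Sum>a<n. y a * Q a j) = (\<Sum>a<n. \<Sum>i<d. c i * (W a i * Q' a j))"
      unfolding y_def using agree j by (simp add: sum_distrib_right sum_distrib_left mult_ac)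
    also have "\<dots> = (\<Sum>i<d. c i * (\<Sum>a<n. W a i * Q' a j))"
      by (subst sum.swap) (simp add: sum_distrib_left)
    also have "\<dots> = 0"
      using o' j t unfolding W_def d_def by (intro sum.neutral) auto
    finally show ?thesis .
  qed
  define N where "N = (\<Sum>a<n. y a * y a)"
  have N: "N = (\<Sum>i<d. c i * c i)"
  proof -
    have "N = (\<Sum>a<n. \<Sum>i<d. \<Sum>i'<d. c i * c i' * (W a i * W a i'))"
      unfolding N_def y_def by (simp add: sum_product mult_ac)
    also have "\<dots> = (\<Sum>i<d. \<Sum>i'<d. c i * c i' * (\<Sum>a<n. W a i * W a i'))"
      by (subst sum.swap, rule sum.cong[OF refl], subst sum.swap) (simp add: sum_distrib_left)
    also have "\<dots> = (\<Sum>i<d. \<Sum>i'<d. if i = i' then c i * c i else 0)"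
      using oW by (intro sum.cong refl) auto
    finally show ?thesis by simp
  qed
  have Npos: "N > 0"
  proof -
    obtain i0 where i0: "i0 < d" "c i0 \<noteq> 0" using cnz by blast
    have "c i0 * c i0 > 0" using i0(2) not_real_square_gt_zero by blast
    also have "c i0 * c i0 \<le> (\<Sum>i<d. c i * c i)" by (rule member_le_sum) (use i0 in auto)
    finally show ?thesis unfolding N by simp
  qed
  define q where "q a = y a / sqrt N" for a
  have q1: "(\<Sum>a<n. q a * q a) = 1"
  proof -
    have "(\<Sum>a<n. q a * q a) = (\<Sum>a<n. y a * y a) / (sqrt N * sqrt N)"
      unfolding q_def by (simp add: sum_divide_distrib)
    also have "\<dots> = 1" using Npos unfolding N_def[symmetric] by simp
    finally show ?thesis .
  qed
  have q2: "\<forall>j<t. (\<Sum>a<n. q a * Q a j) = 0"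
    using yQ unfolding q_def by (simp add: sum_divide_distrib[symmetric])
  have q3: "\<forall>a<n. (\<Sum>b<n. M a b * q b) = \<mu> * q a"
  proof (intro allI impI)
    fix a assume a: "a < n"
    have "(\<Sum>b<n. M a b * q b) = (\<Sum>b<n. M a b * y b) / sqrt N"
      unfolding q_def by (simp add: sum_divide_distrib)
    thus "(\<Sum>b<n. M a b * q b) = \<mu> * q a" using My[OF a] unfolding q_def by simp
  qed
  show ?thesis using q1 q2 q3 by blast
qed

lemma sort_perm:
  fixes f :: "nat \<Rightarrow> real"
  shows "\<exists>\<pi>. bij_betw \<pi> {..<k} {..<k} \<and> (\<forall>i j. i \<le> j \<and> j < k \<longrightarrow> f (\<pi> i) \<le> f (\<pi> j))"
proof -
  define xs where "xs = sort_key f [0..<k]"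
  have len: "length xs = k" unfolding xs_def by simp
  have dist: "distinct xs" unfolding xs_def by simp
  have hset: "set xs = {..<k}" unfolding xs_def by (simp add: atLeast0LessThan)
  have sorted: "sorted (map f xs)" unfolding xs_def by (rule sorted_sort_key)
  have "bij_betw ((!) xs) {..<k} {..<k}"
    by (rule bij_betw_nth[OF dist]) (simp_all add: len hset)
  moreover have "\<forall>i j. i \<le> j \<and> j < k \<longrightarrow> f (xs ! i) \<le> f (xs ! j)"
  proof (intro allI impI)
    fix i j assume ij: "i \<le> j \<and> j < k"
    have "map f xs ! i \<le> map f xs ! j" using sorted ij len unfolding sorted_iff_nth_mono by simp
    thus "f (xs ! i) \<le> f (xs ! j)" using ij len by simp
  qed
  ultimately show ?thesis by blast
qed

lemma dec_to_svd:
  assumes oU: "orthS m {..<min m n} U" and oV: "orthS n {..<min m n} V"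
    and s0: "\<forall>j<min m n. 0 \<le> s j"
    and Y: "\<forall>a<m. \<forall>b<n. Y a b = (\<Sum>j<min m n. U a j * s j * V b j)"
  shows "\<exists>\<pi>. bij_betw \<pi> {..<min m n} {..<min m n} \<and>
     is_svd m n Y (\<lambda>a j. U a (\<pi> j)) (\<lambda>j. s (\<pi> j)) (\<lambda>b j. V b (\<pi> j))"
proof -
  define k where "k = min m n"
  obtain \<pi> where bij: "bij_betw \<pi> {..<k} {..<k}" and mono: "\<forall>i j. i \<le> j \<and> j < k \<longrightarrow> s (\<pi> i) \<le> s (\<pi> j)"
    using sort_perm[of k s] by blast
  have pk: "\<pi> j < k" if "j < k" for j using bij that by (auto simp: bij_betw_def)
  have inj: "\<pi> i = \<pi> j \<longleftrightarrow> i = j" if "i < k" "j < k" for i j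
    using bij that by (auto simp: bij_betw_def inj_on_def)
  have "is_svd m n Y (\<lambda>a j. U a (\<pi> j)) (\<lambda>j. s (\<pi> j)) (\<lambda>b j. V b (\<pi> j))"
    unfolding is_svd_def k_def[symmetric]
  proof (intro conjI allI impI)
    fix i j assume "i < k" "j < k"
    hence "\<pi> i \<in> {..<min m n}" "\<pi> j \<in> {..<min m n}" "(\<pi> i = \<pi> j) = (i = j)" using pk inj unfolding k_def by auto
    thus "(\<Sum>a<m. U a (\<pi> i) * U a (\<pi> j)) = (if i = j then 1 else 0)"
      using oU unfolding orthS_def by simp
  next
    fix i j assume "i < k" "j < k"
    hence "\<pi> i \<in> {..<min m n}" "\<pi> j \<in> {..<min m n}" "(\<pi> i = \<pi> j) = (i = j)" using pk inj unfolding k_def by auto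
    thus "(\<Sum>b<n. V b (\<pi> i) * V b (\<pi> j)) = (if i = j then 1 else 0)"
      using oV unfolding orthS_def by simp
  next
    fix j assume "j < k" thus "0 \<le> s (\<pi> j)" using s0 pk unfolding k_def by auto
  next
    fix i j assume "i \<le> j \<and> j < k" thus "s (\<pi> i) \<le> s (\<pi> j)" using mono by auto
  next
    fix a b assume a: "a < m" and b: "b < n"
    have "(\<Sum>j<k. U a (\<pi> j) * s (\<pi> j) * V b (\<pi> j)) = (\<Sum>j<k. U a j * s j * V b j)"
      by (rule sum.reindex_bij_betw[OF bij, of "\<lambda>j. U a j * s j * V b j"])
    thus "Y a b = (\<Sum>j<k. U a (\<pi> j) * s (\<pi> j) * V b (\<pi> j))" using Y a b unfolding k_def by simp
  qed
  thus ?thesis using bij unfolding k_def by blast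
qed

lemma spectral_partial:
  fixes M :: rmat
  assumes sym: "\<forall>a<n. \<forall>b<n. M a b = M b a"
  shows "t \<le> n \<Longrightarrow> \<exists>Q lam. orthS n {..<t} Q \<and> (\<forall>j<t. \<forall>a<n. (\<Sum>b<n. M a b * Q b j) = lam j * Q a j)"
proof (induction t)
  case 0
  show ?case unfolding orthS_def by auto
next
  case (Suc t)
  then obtain Q lam where oQ: "orthS n {..<t} Q" and eig: "\<forall>j<t. \<forall>a<n. (\<Sum>b<n. M a b * Q b j) = lam j * Q a j"
    by auto
  have t: "t < n" using Suc by simp
  obtain q \<mu> where q1: "(\<Sum>a<n. q a * q a) = 1" and q2: "\<forall>j<t. (\<Sum>a<n. q a * Q a j) = 0"
    and q3: "\<forall>a<n. (\<Sum>b<n. M a b * q b) = \<mu> * q a"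
    using spectral_step[OF sym t oQ eig] by blast
  define Q1 where "Q1 a j = (if j = t then q a else Q a j)" for a j
  define lam1 where "lam1 = lam(t := \<mu>)"
  have qQ: "\<forall>j<t. (\<Sum>a<n. Q a j * q a) = 0" using q2 by (simp add: mult.commute)
  have "orthS n {..<Suc t} Q1" unfolding orthS_def
  proof (intro ballI)
    fix i j assume i: "i \<in> {..<Suc t}" and j: "j \<in> {..<Suc t}"
    show "(\<Sum>a<n. Q1 a i * Q1 a j) = (if i = j then 1 else 0)"
    proof (cases "i = t")
      case True
      thus ?thesis using j q1 q2 unfolding Q1_def by (cases "j = t") auto
    next
      case False
      hence it: "i < t" using i by auto
      show ?thesis
      proof (cases "j = t")
        case True thus ?thesis using it qQ unfolding Q1_def by auto
      next
        case False
        hence "j < t" using j by auto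
        thus ?thesis using it oQ unfolding Q1_def orthS_def by auto
      qed
    qed
  qed
  moreover have "\<forall>j<Suc t. \<forall>a<n. (\<Sum>b<n. M a b * Q1 b j) = lam1 j * Q1 a j"
    using eig q3 unfolding Q1_def lam1_def by (auto simp: less_Suc_eq)
  ultimately show ?case by blast
qed

lemma spectral:
  fixes M :: rmat
  assumes sym: "\<forall>a<n. \<forall>b<n. M a b = M b a"
  shows "\<exists>Q lam. orthS n {..<n} Q \<and> (\<forall>j<n. \<forall>a<n. (\<Sum>b<n. M a b * Q b j) = lam j * Q a j)"
  using spectral_partial[OF sym, of n] by simp

lemma svd_exists_le:
  fixes Y :: rmat
  assumes nm: "n \<le> m"
  shows "\<exists>U s V. orthS m {..<n} U \<and> orthS n {..<n} V \<and> (\<forall>j<n. 0 \<le> s j) \<and>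
     (\<forall>a<m. \<forall>b<n. Y a b = (\<Sum>j<n. U a j * s j * V b j))"
proof -
  define M where "M b b' = (\<Sum>a<m. Y a b * Y a b')" for b b'
  have sym: "\<forall>a<n. \<forall>b<n. M a b = M b a" unfolding M_def by (simp add: mult.commute)
  obtain Q lam where oQ: "orthS n {..<n} Q" and eig: "\<forall>j<n. \<forall>a<n. (\<Sum>b<n. M a b * Q b j) = lam j * Q a j"
    using spectral[OF sym] by blast
  define w where "w j a = (\<Sum>b<n. Y a b * Q b j)" for j a
  have ww: "(\<Sum>a<m. w i a * w j a) = lam j * (if i = j then 1 else 0)" if "i < n" "j < n" for i j
  proof -
    have "(\<Sum>a<m. w i a * w j a) = (\<Sum>a<m. \<Sum>b<n. \<Sum>b'<n. Q b i * (Y a b * Y a b') * Q b' j)"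
      unfolding w_def by (simp add: sum_product mult_ac)
    also have "\<dots> = (\<Sum>b<n. \<Sum>a<m. \<Sum>b'<n. Q b i * (Y a b * Y a b') * Q b' j)" by (rule sum.swap)
    also have "\<dots> = (\<Sum>b<n. \<Sum>b'<n. \<Sum>a<m. Q b i * (Y a b * Y a b') * Q b' j)"
      by (rule sum.cong[OF refl], rule sum.swap)
    also have "\<dots> = (\<Sum>b<n. Q b i * (\<Sum>b'<n. M b b' * Q b' j))"
      unfolding M_def by (simp add: sum_distrib_left sum_distrib_right mult_ac)
    also have "\<dots> = (\<Sum>b<n. Q b i * (lam j * Q b j))"
      using eig that by (intro sum.cong refl) auto
    also have "\<dots> = lam j * (\<Sum>b<n. Q b i * Q b j)" by (simp add: sum_distrib_left mult_ac)
    also have "\<dots> = lam j * (if i = j then 1 else 0)" using oQ that unfolding orthS_def by auto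
    finally show ?thesis .
  qed
  have lam0: "0 \<le> lam j" if "j < n" for j
  proof -
    have "0 \<le> (\<Sum>a<m. w j a * w j a)" by (intro sum_nonneg) auto
    thus ?thesis using ww[OF that that] by simp
  qed
  define s where "s j = sqrt (lam j)" for j
  define J where "J = {j. j < n \<and> 0 < lam j}"
  define u where "u a j = w j a / s j" for a j
  have ou: "orthS m J u" unfolding orthS_def
  proof (intro ballI)
    fix i j assume i: "i \<in> J" and j: "j \<in> J"
    have "(\<Sum>a<m. u a i * u a j) = (\<Sum>a<m. w i a * w j a) / (s i * s j)"
      unfolding u_def by (simp add: sum_divide_distrib)
    also have "\<dots> = (if i = j then 1 else 0)"
      using ww[of i j] i j unfolding J_def s_def by (auto simp: real_sqrt_mult[symmetric])
    finally show "(\<Sum>a<m. u a i * u a j) = (if i = j then 1 else 0)" .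
  qed
  obtain U where oU: "orthS m {..<n} U" and agree: "\<forall>j\<in>J. \<forall>a. U a j = u a j"
    using orth_extend[of "{..<n}" m J u] nm ou unfolding J_def by auto
  have wU: "w j a = U a j * s j" if j: "j < n" and a: "a < m" for j a
  proof (cases "j \<in> J")
    case True
    hence "s j > 0" unfolding J_def s_def by simp
    thus ?thesis using agree True unfolding u_def by simp
  next
    case False
    hence l0: "lam j = 0" using lam0[OF j] j unfolding J_def by auto
    hence "(\<Sum>a<m. w j a * w j a) = 0" using ww[OF j j] by simp
    hence "\<forall>a\<in>{..<m}. w j a * w j a = 0" by (subst (asm) sum_nonneg_eq_0_iff) auto
    hence "w j a = 0" using a by simp
    thus ?thesis using l0 unfolding s_def by simp
  qed
  have dec: "Y a b = (\<Sum>j<n. U a j * s j * Q b j)" if a: "a < m" and b: "b < n" for a b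
  proof -
    have "Y a b = (\<Sum>j<n. Q b j * (\<Sum>b'<n. Q b' j * Y a b'))" by (rule expand_basis[OF oQ b])
    also have "\<dots> = (\<Sum>j<n. Q b j * w j a)" unfolding w_def by (simp add: mult.commute)
    also have "\<dots> = (\<Sum>j<n. U a j * s j * Q b j)" using wU a by (intro sum.cong refl) (simp add: mult_ac)
    finally show ?thesis .
  qed
  have "\<forall>j<n. 0 \<le> s j" unfolding s_def using lam0 by simp
  thus ?thesis using oU oQ dec by blast
qed

lemma svd_exists_unsorted:
  fixes Y :: rmat
  shows "\<exists>U s V. orthS m {..<min m n} U \<and> orthS n {..<min m n} V \<and> (\<forall>j<min m n. 0 \<le> s j) \<and>
     (\<forall>a<m. \<forall>b<n. Y a b = (\<Sum>j<min m n. U a j * s j * V b j))"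
proof (cases "n \<le> m")
  case True
  thus ?thesis using svd_exists_le[OF True, of Y] by (simp add: min_absorb2)
next
  case False
  hence mn: "m \<le> n" by simp
  obtain U s V where "orthS n {..<m} U" "orthS m {..<m} V" "\<forall>j<m. 0 \<le> s j"
     "\<forall>a<n. \<forall>b<m. Y b a = (\<Sum>j<m. U a j * s j * V b j)"
    using svd_exists_le[OF mn, of "\<lambda>a b. Y b a"] by blast
  thus ?thesis using mn
    by (intro exI[of _ V] exI[of _ s] exI[of _ U]) (auto simp: min_absorb1 mult_ac)
qed

lemma svd_exists: "\<exists>U s V. is_svd m n Y U s V"
proof -
  obtain U s V where "orthS m {..<min m n} U" "orthS n {..<min m n} V" "\<forall>j<min m n. 0 \<le> s j"
     "\<forall>a<m. \<forall>b<n. Y a b = (\<Sum>j<min m n. U a j * s j * V b j)"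
    using svd_exists_unsorted by blast
  from dec_to_svd[OF this] show ?thesis by blast
qed

lemma rearrange:
  fixes w h :: "nat \<Rightarrow> real"
  assumes wm: "\<forall>i j. i \<le> j \<and> j < k \<longrightarrow> w j \<le> w i"
    and h0: "\<forall>j<k. 0 \<le> h j"
    and bij: "bij_betw \<pi> {..<k} {..<k}"
    and hm: "\<forall>i j. i \<le> j \<and> j < k \<longrightarrow> h (\<pi> i) \<le> h (\<pi> j)"
  shows "(\<Sum>j<k. w j * h (\<pi> j)) \<le> (\<Sum>j<k. w j * h j)"
proof (cases "k = 0")
  case True thus ?thesis by simp
next
  case False
  define W where "W = w 0"
  define a where "a i = W - w i" for i
  define b where "b j = h (\<pi> j)" for j
  define P where "P i j = (if i = \<pi> j then 1 else (0::real))" for i j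
  have pk: "\<pi> j < k" if "j < k" for j using bij that by (auto simp: bij_betw_def)
  have reidx: "(\<Sum>j<k. g (\<pi> j)) = (\<Sum>j<k. g j)" for g :: "nat \<Rightarrow> real"
    by (rule sum.reindex_bij_betw[OF bij])
  have ab: "(\<Sum>i<k. \<Sum>j<k. a i * b j * P i j) \<le> (\<Sum>i<k. a i * b i)"
  proof (rule abel_bound)
    show "\<forall>i<k. 0 \<le> a i" unfolding a_def W_def using wm by auto
    show "\<forall>i j. i \<le> j \<and> j < k \<longrightarrow> a i \<le> a j" unfolding a_def using wm by auto
    show "\<forall>i<k. 0 \<le> b i" unfolding b_def using h0 pk by auto
    show "\<forall>i j. i \<le> j \<and> j < k \<longrightarrow> b i \<le> b j" unfolding b_def using hm by auto
    show "\<forall>i<k. \<forall>j<k. 0 \<le> P i j" unfolding P_def by auto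
    show "\<forall>i<k. (\<Sum>j<k. P i j) \<le> 1"
    proof (intro allI impI)
      fix i assume i: "i < k"
      have "(\<Sum>j<k. P i j) = (\<Sum>j<k. (\<lambda>j'. if i = j' then 1 else (0::real)) (\<pi> j))" unfolding P_def ..
      also have "\<dots> = (\<Sum>j<k. (if i = j then 1 else (0::real)))" by (rule reidx)
      also have "\<dots> = 1" using i by simp
      finally show "(\<Sum>j<k. P i j) \<le> 1" by simp
    qed
    show "\<forall>j<k. (\<Sum>i<k. P i j) \<le> 1"
    proof (intro allI impI)
      fix j assume j: "j < k"
      have "(\<Sum>i<k. P i j) = 1" unfolding P_def using pk[OF j] by simp
      thus "(\<Sum>i<k. P i j) \<le> 1" by simp
    qed
  qed
  have L: "(\<Sum>i<k. \<Sum>j<k. a i * b j * P i j) = W * (\<Sum>j<k. h j) - (\<Sum>j<k. w j * h j)"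
  proof -
    have "(\<Sum>i<k. \<Sum>j<k. a i * b j * P i j) = (\<Sum>j<k. \<Sum>i<k. a i * b j * P i j)" by (rule sum.swap)
    also have "\<dots> = (\<Sum>j<k. a (\<pi> j) * b j)"
      unfolding P_def using pk by (intro sum.cong refl) (simp add: if_distrib cong: if_cong)
    also have "\<dots> = (\<Sum>j<k. (\<lambda>x. (W - w x) * h x) (\<pi> j))" unfolding a_def b_def ..
    also have "\<dots> = (\<Sum>j<k. (W - w j) * h j)" by (rule reidx)
    also have "\<dots> = W * (\<Sum>j<k. h j) - (\<Sum>j<k. w j * h j)"
      by (simp add: left_diff_distrib sum_subtractf sum_distrib_left)
    finally show ?thesis .
  qed
  have R: "(\<Sum>i<k. a i * b i) = W * (\<Sum>j<k. h j) - (\<Sum>j<k. w j * h (\<pi> j))"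
  proof -
    have "(\<Sum>i<k. a i * b i) = W * (\<Sum>j<k. h (\<pi> j)) - (\<Sum>j<k. w j * h (\<pi> j))"
      unfolding a_def b_def by (simp add: left_diff_distrib sum_subtractf sum_distrib_left)
    also have "(\<Sum>j<k. h (\<pi> j)) = (\<Sum>j<k. h j)" by (rule reidx)
    finally show ?thesis .
  qed
  show ?thesis using ab L R by simp
qed

lemma xp_ineq:
  assumes xp: "is_xp_selection p xp" and s0: "0 \<le> \<sigma>" and c0: "0 \<le> c" and x0: "0 \<le> x"
  shows "(1/2) * (xp \<sigma> c - \<sigma>)\<^sup>2 + c * (xp \<sigma> c) powr p \<le> (1/2) * (x - \<sigma>)\<^sup>2 + c * x powr p"
  using xp s0 c0 x0 unfolding is_xp_selection_def by blast

lemma xp_nonneg: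
  assumes xp: "is_xp_selection p xp" and s0: "0 \<le> \<sigma>" and c0: "0 \<le> c"
  shows "0 \<le> xp \<sigma> c"
  using xp s0 c0 unfolding is_xp_selection_def by blast

lemma sq_diff_expand:
  fixes Y B :: rmat
  shows "(\<Sum>a<m. \<Sum>b<n. (Y a b - B a b)\<^sup>2) =
    (\<Sum>a<m. \<Sum>b<n. Y a b * Y a b) - 2 * (\<Sum>a<m. \<Sum>b<n. Y a b * B a b) + (\<Sum>a<m. \<Sum>b<n. B a b * B a b)"
proof -
  have "(\<Sum>a<m. \<Sum>b<n. (Y a b - B a b)\<^sup>2) = (\<Sum>a<m. \<Sum>b<n. Y a b * Y a b - 2 * (Y a b * B a b) + B a b * B a b)"
    by (intro sum.cong refl) (simp add: power2_eq_square algebra_simps)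
  also have "\<dots> = (\<Sum>a<m. \<Sum>b<n. Y a b * Y a b) - 2 * (\<Sum>a<m. \<Sum>b<n. Y a b * B a b) + (\<Sum>a<m. \<Sum>b<n. B a b * B a b)"
    by (simp add: sum.distrib sum_subtractf sum_distrib_left)
  finally show ?thesis .
qed

lemma sq_diff_expand1:
  fixes t s :: "nat \<Rightarrow> real"
  shows "(\<Sum>j<k. (t j - s j)\<^sup>2) = (\<Sum>j<k. t j * t j) - 2 * (\<Sum>j<k. t j * s j) + (\<Sum>j<k. s j * s j)"
proof -
  have "(\<Sum>j<k. (t j - s j)\<^sup>2) = (\<Sum>j<k. t j * t j - 2 * (t j * s j) + s j * s j)"
    by (intro sum.cong refl) (simp add: power2_eq_square algebra_simps)
  also have "\<dots> = (\<Sum>j<k. t j * t j) - 2 * (\<Sum>j<k. t j * s j) + (\<Sum>j<k. s j * s j)"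
    by (simp add: sum.distrib sum_subtractf sum_distrib_left)
  finally show ?thesis .
qed

lemma slice_lower:
  fixes Y B U V :: rmat and s w :: "nat \<Rightarrow> real"
  assumes tau: "\<tau> > 0" and w0: "\<forall>j<min m n. 0 \<le> w j" and xp: "is_xp_selection p xp"
    and B: "is_svd m n B U s V"
  shows "(\<Sum>j<min m n. \<tau> * w j * xp (s j) (\<tau> * w j) powr p + (1/2) * (xp (s j) (\<tau> * w j) - s j)\<^sup>2)
     \<le> \<tau> * (\<Sum>j<min m n. w j * sing_val m n Y j powr p) + (1/2) * (\<Sum>a<m. \<Sum>b<n. (Y a b - B a b)\<^sup>2)"
proof -
  define k where "k = min m n"
  obtain U' t V' where Y: "is_svd m n Y U' t V'" using svd_exists by blast
  have sv: "sing_val m n Y j = t j" if "j < k" for j using sing_val_eq[OF Y] that unfolding k_def by simp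
  have t0: "0 \<le> t j" if "j < k" for j using Y that unfolding is_svd_def k_def by auto
  have s0: "0 \<le> s j" if "j < k" for j using B that unfolding is_svd_def k_def by auto
  have "(\<Sum>j<k. (t j - s j)\<^sup>2) \<le> (\<Sum>a<m. \<Sum>b<n. (Y a b - B a b)\<^sup>2)"
    using sq_diff_expand[where Y=Y and B=B and m=m and n=n] sq_diff_expand1[where t=t and s=s and k=k]
      svd_norm[OF Y] svd_norm[OF B] von_neumann[OF Y B] unfolding k_def by linarith
  moreover have "(\<Sum>j<k. \<tau> * w j * xp (s j) (\<tau> * w j) powr p + (1/2) * (xp (s j) (\<tau> * w j) - s j)\<^sup>2)
      \<le> (\<Sum>j<k. \<tau> * w j * t j powr p + (1/2) * (t j - s j)\<^sup>2)"
  proof (rule sum_mono)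
    fix j assume j: "j \<in> {..<k}"
    have jk: "j < k" using j by simp
    have "0 \<le> \<tau> * w j" using tau w0 j unfolding k_def by auto
    from xp_ineq[OF xp s0[OF jk] this t0[OF jk]]
    show "\<tau> * w j * xp (s j) (\<tau> * w j) powr p + (1/2) * (xp (s j) (\<tau> * w j) - s j)\<^sup>2
      \<le> \<tau> * w j * t j powr p + (1/2) * (t j - s j)\<^sup>2" by simp
  qed
  moreover have "(\<Sum>j<k. \<tau> * w j * t j powr p + (1/2) * (t j - s j)\<^sup>2) =
      \<tau> * (\<Sum>j<k. w j * sing_val m n Y j powr p) + (1/2) * (\<Sum>j<k. (t j - s j)\<^sup>2)"
    using sv by (simp add: sum.distrib sum_distrib_left mult_ac)
  ultimately show ?thesis unfolding k_def by linarith
qed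

lemma slice_upper:
  fixes B U V :: rmat and s w :: "nat \<Rightarrow> real"
  assumes tau: "\<tau> > 0" and p: "0 < p" and w0: "\<forall>j<min m n. 0 \<le> w j"
    and wm: "\<forall>i j. i \<le> j \<and> j < min m n \<longrightarrow> w j \<le> w i"
    and xp: "is_xp_selection p xp"
    and B: "is_svd m n B U s V"
  shows "\<tau> * (\<Sum>j<min m n. w j * sing_val m n (S_op m n xp \<tau> w U s V) j powr p)
      + (1/2) * (\<Sum>a<m. \<Sum>b<n. (S_op m n xp \<tau> w U s V a b - B a b)\<^sup>2)
     \<le> (\<Sum>j<min m n. \<tau> * w j * xp (s j) (\<tau> * w j) powr p + (1/2) * (xp (s j) (\<tau> * w j) - s j)\<^sup>2)"
proof -
  define k where "k = min m n"
  define g where "g j = xp (s j) (\<tau> * w j)" for j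
  define Z where "Z = S_op m n xp \<tau> w U s V"
  have Zd: "Z a b = (\<Sum>j<k. U a j * g j * V b j)" for a b unfolding Z_def S_op_def g_def k_def ..
  have s0: "0 \<le> s j" if "j < k" for j using B that unfolding is_svd_def k_def by auto
  have g0: "\<forall>j<k. 0 \<le> g j"
  proof (intro allI impI)
    fix j assume j: "j < k"
    have "0 \<le> \<tau> * w j" using tau w0 j unfolding k_def by auto
    thus "0 \<le> g j" unfolding g_def using xp_nonneg[OF xp s0[OF j]] by blast
  qed
  have oU: "orthS m {..<k} U" and oV: "orthS n {..<k} V"
    using svd_orthU[OF B] svd_orthV[OF B] unfolding k_def by auto
  obtain \<pi> where bij: "bij_betw \<pi> {..<k} {..<k}" and
    Zs: "is_svd m n Z (\<lambda>a j. U a (\<pi> j)) (\<lambda>j. g (\<pi> j)) (\<lambda>b j. V b (\<pi> j))"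
    using dec_to_svd[of m n U V g Z] oU oV g0 Zd unfolding k_def by auto
  have sv: "sing_val m n Z j = g (\<pi> j)" if "j < k" for j using sing_val_eq[OF Zs] that unfolding k_def by simp
  have gm: "\<forall>i j. i \<le> j \<and> j < k \<longrightarrow> g (\<pi> i) \<le> g (\<pi> j)" using Zs unfolding is_svd_def k_def by auto
  have pk: "\<pi> j < k" if "j < k" for j using bij that by (auto simp: bij_betw_def)
  have part1: "(\<Sum>j<k. w j * sing_val m n Z j powr p) \<le> (\<Sum>j<k. w j * g j powr p)"
  proof -
    have "(\<Sum>j<k. w j * sing_val m n Z j powr p) = (\<Sum>j<k. w j * (\<lambda>j. g j powr p) (\<pi> j))"
      using sv by simp
    also have "\<dots> \<le> (\<Sum>j<k. w j * (\<lambda>j. g j powr p) j)"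
    proof (rule rearrange[OF _ _ bij])
      show "\<forall>i j. i \<le> j \<and> j < k \<longrightarrow> w j \<le> w i" using wm unfolding k_def by auto
      show "\<forall>j<k. 0 \<le> g j powr p" by simp
      show "\<forall>i j. i \<le> j \<and> j < k \<longrightarrow> g (\<pi> i) powr p \<le> g (\<pi> j) powr p"
      proof (intro allI impI)
        fix i j assume ij: "i \<le> j \<and> j < k"
        hence "i < k" by simp
        show "g (\<pi> i) powr p \<le> g (\<pi> j) powr p"
          using gm ij g0 pk[OF \<open>i < k\<close>] p by (intro powr_mono2) auto
      qed
    qed
    finally show ?thesis by simp
  qed
  have part2: "(\<Sum>a<m. \<Sum>b<n. (Z a b - B a b)\<^sup>2) = (\<Sum>j<k. (g j - s j)\<^sup>2)"
  proof -
    have "(\<Sum>a<m. \<Sum>b<n. (Z a b - B a b)\<^sup>2) =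
      (\<Sum>a<m. \<Sum>b<n. (\<Sum>i<k. U a i * (g i - s i) * V b i) * (\<Sum>j<k. U a j * (g j - s j) * V b j))"
    proof (intro sum.cong refl)
      fix a b assume a: "a \<in> {..<m}" and b: "b \<in> {..<n}"
      have "B a b = (\<Sum>j<k. U a j * s j * V b j)" using B a b unfolding is_svd_def k_def by auto
      hence "Z a b - B a b = (\<Sum>j<k. U a j * (g j - s j) * V b j)"
        unfolding Zd by (simp add: sum_subtractf[symmetric] algebra_simps)
      thus "(Z a b - B a b)\<^sup>2 = (\<Sum>i<k. U a i * (g i - s i) * V b i) * (\<Sum>j<k. U a j * (g j - s j) * V b j)"
        by (simp add: power2_eq_square)
    qed
    also have "\<dots> = (\<Sum>i<k. (g i - s i) * (g i - s i))" by (rule ip_same[OF oU oV])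
    finally show ?thesis by (simp add: power2_eq_square)
  qed
  have "\<tau> * (\<Sum>j<k. w j * sing_val m n Z j powr p) + (1/2) * (\<Sum>a<m. \<Sum>b<n. (Z a b - B a b)\<^sup>2)
      \<le> \<tau> * (\<Sum>j<k. w j * g j powr p) + (1/2) * (\<Sum>j<k. (g j - s j)\<^sup>2)"
    using part1 part2 tau by simp
  also have "\<dots> = (\<Sum>j<k. \<tau> * w j * g j powr p + (1/2) * (g j - s j)\<^sup>2)"
    by (simp add: sum.distrib sum_distrib_left mult_ac)
  finally show ?thesis unfolding k_def Z_def g_def .
qed

lemma vec_norm_pres:
  fixes P :: rmat and x :: "nat \<Rightarrow> real"
  assumes o: "orthS n {..<n} P"
  shows "(\<Sum>i<n. (\<Sum>k<n. P k i * x k)\<^sup>2) = (\<Sum>k<n. (x k)\<^sup>2)"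
proof -
  have "(\<Sum>i<n. (\<Sum>k<n. P k i * x k)\<^sup>2) = (\<Sum>i<n. \<Sum>k<n. \<Sum>k'<n. x k * x k' * (P k i * P k' i))"
    by (simp add: power2_eq_square sum_product mult_ac)
  also have "\<dots> = (\<Sum>k<n. \<Sum>i<n. \<Sum>k'<n. x k * x k' * (P k i * P k' i))" by (rule sum.swap)
  also have "\<dots> = (\<Sum>k<n. \<Sum>k'<n. \<Sum>i<n. x k * x k' * (P k i * P k' i))"
    by (rule sum.cong[OF refl], rule sum.swap)
  also have "\<dots> = (\<Sum>k<n. \<Sum>k'<n. x k * x k' * (\<Sum>i<n. P k i * P k' i))"
    by (simp add: sum_distrib_left)
  also have "\<dots> = (\<Sum>k<n. \<Sum>k'<n. if k = k' then x k * x k else 0)"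
    using orth_complete[OF o] by (intro sum.cong refl) auto
  also have "\<dots> = (\<Sum>k<n. (x k)\<^sup>2)" by (simp add: power2_eq_square)
  finally show ?thesis .
qed

lemma transform_diff:
  "transform n3 P (\<lambda>a b k. X a b k - A a b k) a b i = transform n3 P X a b i - transform n3 P A a b i"
  unfolding transform_def by (simp add: right_diff_distrib sum_subtractf)

lemma phibar_lo: "i < r \<Longrightarrow> transform n3 (phibar r Phi Phic) D a b i = transform n3 Phi D a b i"
  unfolding transform_def phibar_def by simp

lemma phibar_hi: "transform n3 (phibar r Phi Phic) D a b (r + j) = transform n3 Phic D a b j"
  unfolding transform_def phibar_def by simp

lemma fro_decomp:
  assumes o: "orthS n3 {..<n3} (phibar r Phi Phic)" and r: "r \<le> n3"
  shows "fro_sq n1 n2 n3 D = (\<Sum>a<n1. \<Sum>b<n2. (\<Sum>i<r. (transform n3 Phi D a b i)\<^sup>2)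
            + (\<Sum>j<n3 - r. (transform n3 Phic D a b j)\<^sup>2))"
  unfolding fro_sq_def
proof (intro sum.cong refl)
  fix a b
  have "(\<Sum>k<n3. (D a b k)\<^sup>2) = (\<Sum>i<n3. (\<Sum>k<n3. phibar r Phi Phic k i * D a b k)\<^sup>2)"
    using vec_norm_pres[OF o, of "D a b"] by simp
  also have "\<dots> = (\<Sum>i<n3. (transform n3 (phibar r Phi Phic) D a b i)\<^sup>2)"
    unfolding transform_def ..
  also have "\<dots> = (\<Sum>i<r. (transform n3 (phibar r Phi Phic) D a b i)\<^sup>2)
      + (\<Sum>j<n3 - r. (transform n3 (phibar r Phi Phic) D a b (r + j))\<^sup>2)"
    by (rule sum_split_at[OF r])
  also have "\<dots> = (\<Sum>i<r. (transform n3 Phi D a b i)\<^sup>2) + (\<Sum>j<n3 - r. (transform n3 Phic D a b j)\<^sup>2)"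
    by (simp add: phibar_lo phibar_hi)
  finally show "(\<Sum>k<n3. (D a b k)\<^sup>2) = (\<Sum>i<r. (transform n3 Phi D a b i)\<^sup>2) + (\<Sum>j<n3 - r. (transform n3 Phic D a b j)\<^sup>2)" .
qed

lemma xstar_transform:
  assumes orth: "\<forall>i<n3. \<forall>j<n3. (\<Sum>k<n3. Pb k i * Pb k j) = (if i = j then 1 else 0)"
    and j: "j < n3"
  shows "transform n3 Pb (transform n3 (mtranspose Pb) Z) a b j = Z a b j"
proof -
  have "transform n3 Pb (transform n3 (mtranspose Pb) Z) a b j = (\<Sum>k<n3. Pb k j * (\<Sum>i<n3. Pb k i * Z a b i))"
    unfolding transform_def mtranspose_def ..
  also have "\<dots> = (\<Sum>k<n3. \<Sum>i<n3. Pb k j * Pb k i * Z a b i)" by (simp add: sum_distrib_left mult_ac)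
  also have "\<dots> = (\<Sum>i<n3. \<Sum>k<n3. Pb k j * Pb k i * Z a b i)" by (rule sum.swap)
  also have "\<dots> = (\<Sum>i<n3. (\<Sum>k<n3. Pb k j * Pb k i) * Z a b i)" by (simp add: sum_distrib_right)
  also have "\<dots> = (\<Sum>i<n3. if j = i then Z a b i else 0)"
    using orth j by (intro sum.cong refl) auto
  also have "\<dots> = Z a b j" using j by simp
  finally show ?thesis .
qed

theorem theorem1:
  fixes n1 n2 n3 r :: nat and A :: tensor and \<tau> p :: real and w :: "nat \<Rightarrow> real"
    and Phi Phic :: rmat and xp :: "real \<Rightarrow> real \<Rightarrow> real"
    and U V :: "nat \<Rightarrow> rmat" and s :: "nat \<Rightarrow> nat \<Rightarrow> real"
  assumes tau: "\<tau> > 0"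
    and p: "0 < p" "p \<le> 1"
    and w_mono: "\<forall>i j. i \<le> j \<and> j < min n1 n2 \<longrightarrow> w j \<le> w i"
    and w_nonneg: "\<forall>j<min n1 n2. 0 \<le> w j"
    and r_le: "r \<le> n3"
    and Phi_semi: "\<forall>i<r. \<forall>j<r. (\<Sum>k<n3. Phi k i * Phi k j) = (if i = j then 1 else 0)"
    and Phibar_orth: "\<forall>i<n3. \<forall>j<n3.
          (\<Sum>k<n3. phibar r Phi Phic k i * phibar r Phi Phic k j) = (if i = j then 1 else 0)"
    and xp: "is_xp_selection p xp"
    and svd: "\<forall>i<r. is_svd n1 n2 (slice (transform n3 Phi A) i) (U i) (s i) (V i)"
  shows
    "let Z = (\<lambda>a b i. if i < r then S_op n1 n2 xp \<tau> w (U i) (s i) (V i) a b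
                      else transform n3 Phic A a b (i - r));
         Xstar = transform n3 (mtranspose (phibar r Phi Phic)) Z;
         F = (\<lambda>X. \<tau> * wsp_norm_pow n1 n2 n3 r Phi w p X
                   + (1/2) * fro_sq n1 n2 n3 (\<lambda>a b k. X a b k - A a b k))
     in \<forall>X. F Xstar \<le> F X"
proof -
  define Pb where "Pb = phibar r Phi Phic"
  define Z where "Z = (\<lambda>a b i. if i < r then S_op n1 n2 xp \<tau> w (U i) (s i) (V i) a b
                      else transform n3 Phic A a b (i - r))"
  define Xstar where "Xstar = transform n3 (mtranspose Pb) Z"
  define F where "F = (\<lambda>X. \<tau> * wsp_norm_pow n1 n2 n3 r Phi w p X
                   + (1/2) * fro_sq n1 n2 n3 (\<lambda>a b k. X a b k - A a b k))"
  define B where "B i = slice (transform n3 Phi A) i" for i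
  define Zs where "Zs i = S_op n1 n2 xp \<tau> w (U i) (s i) (V i)" for i
  define Lb where "Lb i = (\<Sum>j<min n1 n2. \<tau> * w j * xp (s i j) (\<tau> * w j) powr p
      + (1/2) * (xp (s i j) (\<tau> * w j) - s i j)\<^sup>2)" for i
  define G where "G Y i = \<tau> * (\<Sum>j<min n1 n2. w j * sing_val n1 n2 Y j powr p)
      + (1/2) * (\<Sum>a<n1. \<Sum>b<n2. (Y a b - B i a b)\<^sup>2)" for Y i
  define R where "R X = (\<Sum>a<n1. \<Sum>b<n2. \<Sum>j<n3 - r. (transform n3 Phic X a b j - transform n3 Phic A a b j)\<^sup>2)" for X
  have oPb: "orthS n3 {..<n3} Pb" using Phibar_orth unfolding orthS_def Pb_def by auto
  have Fdec: "F X = (\<Sum>i<r. G (slice (transform n3 Phi X) i) i) + (1/2) * R X" for X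
  proof -
    have fro: "fro_sq n1 n2 n3 (\<lambda>a b k. X a b k - A a b k) =
       (\<Sum>i<r. \<Sum>a<n1. \<Sum>b<n2. (slice (transform n3 Phi X) i a b - B i a b)\<^sup>2) + R X"
    proof -
      have "fro_sq n1 n2 n3 (\<lambda>a b k. X a b k - A a b k) =
        (\<Sum>a<n1. \<Sum>b<n2. (\<Sum>i<r. (slice (transform n3 Phi X) i a b - B i a b)\<^sup>2)
            + (\<Sum>j<n3 - r. (transform n3 Phic X a b j - transform n3 Phic A a b j)\<^sup>2))"
        using fro_decomp[OF oPb[unfolded Pb_def] r_le] by (simp add: transform_diff B_def slice_def)
      also have "\<dots> = (\<Sum>a<n1. \<Sum>b<n2. \<Sum>i<r. (slice (transform n3 Phi X) i a b - B i a b)\<^sup>2) + R X"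
        unfolding R_def by (simp add: sum.distrib)
      also have "(\<Sum>a<n1. \<Sum>b<n2. \<Sum>i<r. (slice (transform n3 Phi X) i a b - B i a b)\<^sup>2) =
          (\<Sum>i<r. \<Sum>a<n1. \<Sum>b<n2. (slice (transform n3 Phi X) i a b - B i a b)\<^sup>2)"
      proof -
        have "(\<Sum>a<n1. \<Sum>b<n2. \<Sum>i<r. (slice (transform n3 Phi X) i a b - B i a b)\<^sup>2) =
          (\<Sum>a<n1. \<Sum>i<r. \<Sum>b<n2. (slice (transform n3 Phi X) i a b - B i a b)\<^sup>2)"
          by (rule sum.cong[OF refl], rule sum.swap)
        also have "\<dots> = (\<Sum>i<r. \<Sum>a<n1. \<Sum>b<n2. (slice (transform n3 Phi X) i a b - B i a b)\<^sup>2)"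
          by (rule sum.swap)
        finally show ?thesis .
      qed
      finally show ?thesis .
    qed
    have "F X = \<tau> * (\<Sum>i<r. \<Sum>j<min n1 n2. w j * sing_val n1 n2 (slice (transform n3 Phi X) i) j powr p)
        + (1/2) * ((\<Sum>i<r. \<Sum>a<n1. \<Sum>b<n2. (slice (transform n3 Phi X) i a b - B i a b)\<^sup>2) + R X)"
      unfolding F_def wsp_norm_pow_def fro ..
    also have "\<dots> = (\<Sum>i<r. G (slice (transform n3 Phi X) i) i) + (1/2) * R X"
      unfolding G_def by (simp add: sum.distrib sum_distrib_left algebra_simps)
    finally show ?thesis .
  qed
  have Bi: "is_svd n1 n2 (B i) (U i) (s i) (V i)" if i: "i < r" for i
    using svd i unfolding B_def by simp
  have lower: "Lb i \<le> G Y i" if i: "i < r" for i Y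
    unfolding Lb_def G_def
    by (rule slice_lower[OF tau w_nonneg xp Bi[OF i]])
  have upper: "G (Zs i) i \<le> Lb i" if i: "i < r" for i
    unfolding Lb_def G_def Zs_def
    by (rule slice_upper[OF tau p(1) w_nonneg w_mono xp Bi[OF i]])
  have slX: "slice (transform n3 Phi Xstar) i = Zs i" if i: "i < r" for i
  proof (intro ext)
    fix a b
    have "slice (transform n3 Phi Xstar) i a b = transform n3 Pb Xstar a b i"
      unfolding slice_def Pb_def using phibar_lo[OF i] by simp
    also have "\<dots> = Z a b i" unfolding Xstar_def
      by (rule xstar_transform) (use Phibar_orth i r_le in \<open>auto simp: Pb_def\<close>)
    also have "\<dots> = Zs i a b" unfolding Z_def Zs_def using i by simp
    finally show "slice (transform n3 Phi Xstar) i a b = Zs i a b" .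
  qed
  have R0: "R Xstar = 0"
  proof -
    have "transform n3 Phic Xstar a b j = transform n3 Phic A a b j" if j: "j < n3 - r" for a b j
    proof -
      have "transform n3 Phic Xstar a b j = transform n3 Pb Xstar a b (r + j)"
        unfolding Pb_def using phibar_hi by simp
      also have "\<dots> = Z a b (r + j)" unfolding Xstar_def
        by (rule xstar_transform) (use Phibar_orth j r_le in \<open>auto simp: Pb_def\<close>)
      also have "\<dots> = transform n3 Phic A a b j" unfolding Z_def by simp
      finally show ?thesis .
    qed
    thus ?thesis unfolding R_def by simp
  qed
  have R_nonneg: "0 \<le> R X" for X unfolding R_def by (intro sum_nonneg) auto
  have main: "\<forall>X. F Xstar \<le> F X"
  proof
    fix X
    have "F Xstar = (\<Sum>i<r. G (Zs i) i)" unfolding Fdec R0 using slX by simp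
    also have "\<dots> \<le> (\<Sum>i<r. Lb i)" by (intro sum_mono upper) simp
    also have "\<dots> \<le> (\<Sum>i<r. G (slice (transform n3 Phi X) i) i)" by (intro sum_mono lower) simp
    also have "\<dots> \<le> F X" unfolding Fdec using R_nonneg[of X] by simp
    finally show "F Xstar \<le> F X" .
  qed
  thus ?thesis unfolding Let_def F_def Xstar_def Z_def Pb_def .
qed

end
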